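(* Let $r$ be a positive integer with $r\le n_i$ for all $i$, let $T=\sum_{j=1}^r e_1^j\otimes\cdots\otimes e_d^j$, $H$ its stabilizer in $G$, and $\Sigma_r=G/H$. Then $G/H$ is reductive if and only if $r=n_1=\cdots=n_d$. Moreover, when $r=n_1=\cdots=n_d$, the orthogonal complement $\mathfrak{m}$ of $\mathfrak{h}$ in $\mathfrak{g}$ (with respect to the inner product $\langle Z,Z'\rangle=\sum_{i=1}^d\mathrm{tr}(Z_iZ_i'^{\mathsf T})$) satisfies $h\mathfrak{m}h^{-1}\subset\mathfrak{m}$ for all $h\in H$.
   Context: Fix integers $d\ge 3$ and $n_1,\dots,n_d\ge 2$. $V=\mathbb{R}^{n_1}\otimes\cdots\otimes\mathbb{R}^{n_d}$, and $G=\mathrm{GL}(n_1)\times\cdots\times\mathrm{GL}(n_d)$ acts on $V$ by $(g_1,\dots,g_d)\cdot(v_1\otimes\cdots\otimes v_d)=(g_1v_1)\otimes\cdots\otimes(g_dv_d)$, extended linearly. $e_i^1,\dots,e_i^{n_i}$ is the standard basis of $\mathbb{R}^{n_i}$. $\mathfrak{g}=\mathfrak{gl}(n_1)\times\cdots\times\mathfrak{gl}(n_d)$ is the Lie algebra of $G$ (tuples $Z=(Z_1,\dots,Z_d)$ of arbitrary $n_i\times n_i$ matrices), $\mathfrak{h}\subset\mathfrak{g}$ is the Lie algebra of the closed subgroup $H$, and $H$ acts on $\mathfrak{g}$ by $hZh^{-1}=(h_1Z_1h_1^{-1},\dots,h_dZ_dh_d^{-1})$. A homogeneous space $G/H$ is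 called reductive if there exists a linear subspace $\mathfrak{p}\subset\mathfrak{g}$ with $\mathfrak{p}\oplus\mathfrak{h}=\mathfrak{g}$ and $h\mathfrak{p}h^{-1}\subset\mathfrak{p}$ for all $h\in H$. *)

theory Defs
  imports "HOL-Analysis.Analysis" "Jordan_Normal_Form.Matrix"
begin

text \<open>Factors are indexed by i < d (0-based), factor i has dimension n i.
  Basis vectors e_i^1..e_i^{n_i} correspond to indices 0..n_i-1.
  Tuples of matrices are functions nat => real mat, normalized to the empty
  matrix for i >= d.\<close>

definition multi_idx :: "nat \<Rightarrow> (nat \<Rightarrow> nat) \<Rightarrow> (nat \<Rightarrow> nat) set" where
  "multi_idx d n = {k. (\<forall>i<d. k i < n i) \<and> (\<forall>i\<ge>d. k i = 0)}"

definition tensor_space :: "nat \<Rightarrow> (nat \<Rightarrow> nat) \<Rightarrow> ((nat \<Rightarrow> nat) \<Rightarrow> real) set" where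
  "tensor_space d n = {T. \<forall>k. k \<notin> multi_idx d n \<longrightarrow> T k = 0}"

text \<open>Action of (g_1,...,g_d) on V (the linear extension of g_1 v_1 (x) ... (x) g_d v_d).\<close>
definition tensor_act :: "nat \<Rightarrow> (nat \<Rightarrow> nat) \<Rightarrow> (nat \<Rightarrow> real mat) \<Rightarrow> ((nat \<Rightarrow> nat) \<Rightarrow> real) \<Rightarrow> ((nat \<Rightarrow> nat) \<Rightarrow> real)" where
  "tensor_act d n g T = (\<lambda>k. if k \<in> multi_idx d n then
      (\<Sum>j\<in>multi_idx d n. (\<Prod>i<d. g i $$ (k i, j i)) * T j) else 0)"

definition GLprod :: "nat \<Rightarrow> (nat \<Rightarrow> nat) \<Rightarrow> (nat \<Rightarrow> real mat) set" where
  "GLprod d n = {g. (\<forall>i<d. g i \<in> carrier_mat (n i) (n i) \<and> invertible_mat (g i)) \<and>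
                    (\<forall>i\<ge>d. g i = 1\<^sub>m 0)}"

definition glprod :: "nat \<Rightarrow> (nat \<Rightarrow> nat) \<Rightarrow> (nat \<Rightarrow> real mat) set" where
  "glprod d n = {Z. (\<forall>i<d. Z i \<in> carrier_mat (n i) (n i)) \<and> (\<forall>i\<ge>d. Z i = 0\<^sub>m 0 0)}"

definition tup_zero :: "nat \<Rightarrow> (nat \<Rightarrow> nat) \<Rightarrow> nat \<Rightarrow> real mat" where
  "tup_zero d n = (\<lambda>i. if i < d then 0\<^sub>m (n i) (n i) else 0\<^sub>m 0 0)"

definition tup_add :: "(nat \<Rightarrow> real mat) \<Rightarrow> (nat \<Rightarrow> real mat) \<Rightarrow> nat \<Rightarrow> real mat" where
  "tup_add X Y = (\<lambda>i. X i + Y i)"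

definition tup_smult :: "real \<Rightarrow> (nat \<Rightarrow> real mat) \<Rightarrow> nat \<Rightarrow> real mat" where
  "tup_smult c X = (\<lambda>i. c \<cdot>\<^sub>m X i)"

definition mat_exp :: "real mat \<Rightarrow> real mat" where
  "mat_exp A = mat (dim_row A) (dim_col A) (\<lambda>(a, b). \<Sum>k. (A ^\<^sub>m k) $$ (a, b) / fact k)"

definition stabilizer :: "nat \<Rightarrow> (nat \<Rightarrow> nat) \<Rightarrow> ((nat \<Rightarrow> nat) \<Rightarrow> real) \<Rightarrow> (nat \<Rightarrow> real mat) set" where
  "stabilizer d n T = {g \<in> GLprod d n. tensor_act d n g T = T}"

definition lie_algebra :: "nat \<Rightarrow> (nat \<Rightarrow> nat) \<Rightarrow> (nat \<Rightarrow> real mat) set \<Rightarrow> (nat \<Rightarrow> real mat) set" where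
  "lie_algebra d n H = {Z \<in> glprod d n. \<forall>t::real. (\<lambda>i. mat_exp (t \<cdot>\<^sub>m Z i)) \<in> H}"

definition mat_inv :: "real mat \<Rightarrow> real mat" where
  "mat_inv A = (SOME B. B \<in> carrier_mat (dim_row A) (dim_row A) \<and>
                        A * B = 1\<^sub>m (dim_row A) \<and> B * A = 1\<^sub>m (dim_row A))"

definition tup_conj :: "(nat \<Rightarrow> real mat) \<Rightarrow> (nat \<Rightarrow> real mat) \<Rightarrow> nat \<Rightarrow> real mat" where
  "tup_conj h Z = (\<lambda>i. h i * Z i * mat_inv (h i))"

definition is_subspace_gl :: "nat \<Rightarrow> (nat \<Rightarrow> nat) \<Rightarrow> (nat \<Rightarrow> real mat) set \<Rightarrow> bool" where
  "is_subspace_gl d n p \<longleftrightarrow> p \<subseteq> glprod d n \<and> tup_zero d n \<in> p \<and>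
     (\<forall>X\<in>p. \<forall>Y\<in>p. tup_add X Y \<in> p) \<and> (\<forall>c. \<forall>X\<in>p. tup_smult c X \<in> p)"

definition reductive :: "nat \<Rightarrow> (nat \<Rightarrow> nat) \<Rightarrow> (nat \<Rightarrow> real mat) set \<Rightarrow> bool" where
  "reductive d n H \<longleftrightarrow> (\<exists>p. is_subspace_gl d n p \<and>
      p \<inter> lie_algebra d n H = {tup_zero d n} \<and>
      (\<forall>Z\<in>glprod d n. \<exists>X\<in>p. \<exists>Y\<in>lie_algebra d n H. Z = tup_add X Y) \<and>
      (\<forall>h\<in>H. \<forall>Z\<in>p. tup_conj h Z \<in> p))"

definition mat_trace :: "real mat \<Rightarrow> real" where
  "mat_trace A = (\<Sum>a<dim_row A. A $$ (a, a))"

definition gl_inner :: "nat \<Rightarrow> (nat \<Rightarrow> real mat) \<Rightarrow> (nat \<Rightarrow> real mat) \<Rightarrow> real" where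
  "gl_inner d Z W = (\<Sum>i<d. mat_trace (Z i * transpose_mat (W i)))"

definition orth_complement :: "nat \<Rightarrow> (nat \<Rightarrow> nat) \<Rightarrow> (nat \<Rightarrow> real mat) set \<Rightarrow> (nat \<Rightarrow> real mat) set" where
  "orth_complement d n S = {Z \<in> glprod d n. \<forall>W\<in>S. gl_inner d Z W = 0}"

text \<open>T = sum_{j=1}^r e_1^j (x) ... (x) e_d^j (0-based: j < r).\<close>
definition diag_tensor :: "nat \<Rightarrow> (nat \<Rightarrow> nat) \<Rightarrow> nat \<Rightarrow> (nat \<Rightarrow> nat) \<Rightarrow> real" where
  "diag_tensor d n r = (\<lambda>k. if k \<in> multi_idx d n \<and> (\<exists>j<r. \<forall>i<d. k i = j) then 1 else 0)"

end

theory Submission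
  imports Defs
begin


lemma mult_entry:
  assumes "A \<in> carrier_mat n m" "B \<in> carrier_mat m p" "i < n" "j < p"
  shows "(A * B) $$ (i, j) = (\<Sum>k<m. A $$ (i, k) * B $$ (k, j))"
  using assms by (simp add: scalar_prod_def lessThan_atLeast0)

lemma pow_smult_entry:
  fixes A :: "real mat"
  assumes "A \<in> carrier_mat n n" "x < n" "y < n"
  shows "((t \<cdot>\<^sub>m A) ^\<^sub>m k) $$ (x, y) = t ^ k * (A ^\<^sub>m k) $$ (x, y)"
  using assms(2,3)
proof (induction k arbitrary: y)
  case 0
  then show ?case using assms by simp
next
  case (Suc k)
  have c1: "(t \<cdot>\<^sub>m A) ^\<^sub>m k \<in> carrier_mat n n" using assms by simp
  have c2: "t \<cdot>\<^sub>m A \<in> carrier_mat n n" using assms by simp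
  have "((t \<cdot>\<^sub>m A) ^\<^sub>m Suc k) $$ (x, y) = (\<Sum>c<n. ((t \<cdot>\<^sub>m A) ^\<^sub>m k) $$ (x, c) * (t \<cdot>\<^sub>m A) $$ (c, y))"
    using mult_entry[OF c1 c2 Suc.prems] by simp
  also have "\<dots> = (\<Sum>c<n. t ^ Suc k * ((A ^\<^sub>m k) $$ (x, c) * A $$ (c, y)))"
    using Suc assms by (intro sum.cong) (auto simp: mult.assoc mult.left_commute)
  also have "\<dots> = t ^ Suc k * (A ^\<^sub>m Suc k) $$ (x, y)"
    using mult_entry[of "A ^\<^sub>m k" n n A n x y] assms Suc.prems by (simp add: sum_distrib_left)
  finally show ?case .
qed

definition msum :: "real mat \<Rightarrow> nat \<Rightarrow> real" where
  "msum A n = (\<Sum>a<n. \<Sum>b<n. \<bar>A $$ (a, b)\<bar>)"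

lemma pow_bound:
  fixes A :: "real mat"
  assumes "A \<in> carrier_mat n n" "x < n" "y < n"
  shows "\<bar>(A ^\<^sub>m k) $$ (x, y)\<bar> \<le> msum A n ^ k"
  using assms(2,3)
proof (induction k arbitrary: y)
  case 0
  then show ?case using assms by simp
next
  case (Suc k)
  have M0: "0 \<le> msum A n" unfolding msum_def by (intro sum_nonneg) auto
  have col: "(\<Sum>c<n. \<bar>A $$ (c, y)\<bar>) \<le> msum A n"
    unfolding msum_def
    by (intro sum_mono member_le_sum) (use Suc.prems in auto)
  have "\<bar>(A ^\<^sub>m Suc k) $$ (x, y)\<bar> = \<bar>\<Sum>c<n. (A ^\<^sub>m k) $$ (x, c) * A $$ (c, y)\<bar>"
    using mult_entry[of "A ^\<^sub>m k" n n A n x y] assms Suc.prems by simp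
  also have "\<dots> \<le> (\<Sum>c<n. \<bar>(A ^\<^sub>m k) $$ (x, c)\<bar> * \<bar>A $$ (c, y)\<bar>)"
    by (rule order_trans[OF sum_abs]) (simp add: abs_mult)
  also have "\<dots> \<le> (\<Sum>c<n. msum A n ^ k * \<bar>A $$ (c, y)\<bar>)"
    using Suc by (intro sum_mono mult_right_mono) auto
  also have "\<dots> \<le> msum A n ^ k * msum A n"
    using col M0 by (simp add: sum_distrib_left[symmetric] mult_left_mono)
  finally show ?case by (simp add: mult.commute)
qed

lemma exp_entry:
  fixes A :: "real mat"
  assumes "A \<in> carrier_mat n n" "x < n" "y < n"
  shows "mat_exp (t \<cdot>\<^sub>m A) $$ (x, y) = (\<Sum>k. ((A ^\<^sub>m k) $$ (x, y) / fact k) * t ^ k)"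
  using assms unfolding mat_exp_def
  by (simp add: pow_smult_entry[OF assms] mult.commute)

lemma exp_summable:
  fixes A :: "real mat"
  assumes "A \<in> carrier_mat n n" "x < n" "y < n"
  shows "summable (\<lambda>k. ((A ^\<^sub>m k) $$ (x, y) / fact k) * z ^ k)"
proof -
  have g: "summable (\<lambda>k. inverse (fact k) * (msum A n * \<bar>z\<bar>) ^ k)" by (rule summable_exp)
  have b: "norm ((A ^\<^sub>m k) $$ (x, y) / fact k * z ^ k) \<le> inverse (fact k) * (msum A n * \<bar>z\<bar>) ^ k" for k
  proof -
    have "norm ((A ^\<^sub>m k) $$ (x, y) / fact k * z ^ k) = \<bar>(A ^\<^sub>m k) $$ (x, y)\<bar> * \<bar>z\<bar> ^ k / fact k"
      by (simp add: abs_mult power_abs)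
    also have "\<dots> \<le> msum A n ^ k * \<bar>z\<bar> ^ k / fact k"
      by (intro divide_right_mono mult_right_mono pow_bound[OF assms]) auto
    finally show ?thesis
      by (simp add: power_mult_distrib field_simps)
  qed
  show ?thesis
    by (rule summable_comparison_test[OF _ g]) (use b in blast)
qed

lemma exp_entry_deriv:
  fixes A :: "real mat"
  assumes "A \<in> carrier_mat n n" "x < n" "y < n"
  shows "((\<lambda>t. mat_exp (t \<cdot>\<^sub>m A) $$ (x, y)) has_field_derivative A $$ (x, y)) (at 0)"
proof -
  let ?c = "\<lambda>k. (A ^\<^sub>m k) $$ (x, y) / fact k"
  have "((\<lambda>t. \<Sum>k. ?c k * t ^ k) has_field_derivative (\<Sum>k. diffs ?c k * 0 ^ k)) (at 0)"
    by (rule termdiffs_strong_converges_everywhere) (rule exp_summable[OF assms])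
  moreover have "(\<Sum>k. diffs ?c k * 0 ^ k) = diffs ?c 0" by (rule powser_zero)
  moreover have "diffs ?c 0 = A $$ (x, y)"
  proof -
    have "(A ^\<^sub>m 1) = 1\<^sub>m n * A" using assms by simp
    then have "(A ^\<^sub>m 1) $$ (x, y) = A $$ (x, y)" using assms by simp
    then show ?thesis by (simp add: diffs_def)
  qed
  ultimately show ?thesis using exp_entry[OF assms] by simp
qed

lemma exp_entry_zero:
  fixes A :: "real mat"
  assumes "A \<in> carrier_mat n n" "x < n" "y < n"
  shows "mat_exp (0 \<cdot>\<^sub>m A) $$ (x, y) = (if x = y then 1 else 0)"
proof -
  have "mat_exp (0 \<cdot>\<^sub>m A) $$ (x, y) = (\<Sum>k. ((A ^\<^sub>m k) $$ (x, y) / fact k) * 0 ^ k)"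
    by (rule exp_entry[OF assms])
  also have "\<dots> = (A ^\<^sub>m 0) $$ (x, y) / fact 0" by (rule powser_zero)
  finally show ?thesis using assms by simp
qed


lemma finite_multi_idx: "finite (multi_idx d n)"
proof -
  have "multi_idx d n \<subseteq> (\<lambda>f i. if i < d then f i else 0) ` (PiE {..<d} (\<lambda>i. {..<n i}))"
  proof
    fix k assume k: "k \<in> multi_idx d n"
    show "k \<in> (\<lambda>f i. if i < d then f i else 0) ` (PiE {..<d} (\<lambda>i. {..<n i}))"
    proof
      show "restrict k {..<d} \<in> PiE {..<d} (\<lambda>i. {..<n i})" using k by (auto simp: multi_idx_def)
      show "k = (\<lambda>i. if i < d then restrict k {..<d} i else 0)" using k by (auto simp: multi_idx_def)
    qed
  qed
  then show ?thesis by (rule finite_subset) (intro finite_imageI finite_PiE; simp)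
qed

definition cst :: "nat \<Rightarrow> nat \<Rightarrow> nat \<Rightarrow> nat" where
  "cst d c = (\<lambda>i. if i < d then c else 0)"

lemma act_diag_entry:
  assumes "d > 0" "\<forall>i<d. r \<le> n i" "k \<in> multi_idx d n"
  shows "tensor_act d n g (diag_tensor d n r) k = (\<Sum>c<r. \<Prod>i<d. g i $$ (k i, c))"
proof -
  let ?P = "\<lambda>j. \<exists>c<r. \<forall>i<d. j i = c"
  have "tensor_act d n g (diag_tensor d n r) k =
      (\<Sum>j\<in>multi_idx d n. if ?P j then (\<Prod>i<d. g i $$ (k i, j i)) else 0)"
    unfolding tensor_act_def diag_tensor_def
    apply (subst if_P[OF assms(3)])
    apply (rule sum.cong)
     apply simp
    apply (auto simp del: bex_simps)
    done
  also have "\<dots> = sum (\<lambda>j. \<Prod>i<d. g i $$ (k i, j i)) {j\<in>multi_idx d n. ?P j}"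
    by (rule sum.inter_filter[symmetric, OF finite_multi_idx])
  also have "{j\<in>multi_idx d n. ?P j} = cst d ` {..<r}"
  proof safe
    fix j c assume j: "j \<in> multi_idx d n" "c < r" "\<forall>i<d. j i = c"
    then have "j = cst d c" by (auto simp: cst_def multi_idx_def)
    then show "j \<in> cst d ` {..<r}" using j by auto
  next
    fix c assume "c < r"
    then show "cst d c \<in> multi_idx d n" using assms(2) by (auto simp: cst_def multi_idx_def)
    show "\<exists>c'<r. \<forall>i<d. cst d c i = c'" using \<open>c < r\<close> by (auto simp: cst_def)
  qed
  also have "sum (\<lambda>j. \<Prod>i<d. g i $$ (k i, j i)) (cst d ` {..<r}) =
      (\<Sum>c<r. \<Prod>i<d. g i $$ (k i, cst d c i))"
  proof (rule sum.reindex[unfolded comp_def])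
    show "inj_on (cst d) {..<r}"
      using assms(1) by (auto simp: inj_on_def cst_def fun_eq_iff)
  qed
  also have "\<dots> = (\<Sum>c<r. \<Prod>i<d. g i $$ (k i, c))"
    by (intro sum.cong prod.cong) (auto simp: cst_def)
  finally show ?thesis .
qed

lemma stab_iff:
  assumes "d > 0" "\<forall>i<d. r \<le> n i"
  shows "tensor_act d n g (diag_tensor d n r) = diag_tensor d n r \<longleftrightarrow>
    (\<forall>k\<in>multi_idx d n. (\<Sum>c<r. \<Prod>i<d. g i $$ (k i, c)) = (if \<exists>c<r. \<forall>i<d. k i = c then 1 else 0))"
proof
  assume h: "tensor_act d n g (diag_tensor d n r) = diag_tensor d n r"
  show "\<forall>k\<in>multi_idx d n. (\<Sum>c<r. \<Prod>i<d. g i $$ (k i, c)) = (if \<exists>c<r. \<forall>i<d. k i = c then 1 else 0)"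
  proof
    fix k assume k: "k \<in> multi_idx d n"
    have "(\<Sum>c<r. \<Prod>i<d. g i $$ (k i, c)) = tensor_act d n g (diag_tensor d n r) k"
      using act_diag_entry[OF assms k] by simp
    also have "\<dots> = diag_tensor d n r k" using h by simp
    finally show "(\<Sum>c<r. \<Prod>i<d. g i $$ (k i, c)) = (if \<exists>c<r. \<forall>i<d. k i = c then 1 else 0)"
      using k by (simp add: diag_tensor_def)
  qed
next
  assume h: "\<forall>k\<in>multi_idx d n. (\<Sum>c<r. \<Prod>i<d. g i $$ (k i, c)) = (if \<exists>c<r. \<forall>i<d. k i = c then 1 else 0)"
  show "tensor_act d n g (diag_tensor d n r) = diag_tensor d n r"
  proof
    fix k
    show "tensor_act d n g (diag_tensor d n r) k = diag_tensor d n r k"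
    proof (cases "k \<in> multi_idx d n")
      case True
      then show ?thesis using act_diag_entry[OF assms True] h by (simp add: diag_tensor_def)
    next
      case False
      then show ?thesis by (simp add: tensor_act_def diag_tensor_def)
    qed
  qed
qed


lemma lie_deriv_identity:
  assumes d: "d > 0" and rn: "\<forall>i<d. r \<le> n i"
    and Z: "Z \<in> lie_algebra d n (stabilizer d n (diag_tensor d n r))"
    and k: "k \<in> multi_idx d n"
  shows "(\<Sum>c<r. \<Sum>i<d. Z i $$ (k i, c) * (\<Prod>l\<in>{..<d}-{i}. if k l = c then 1 else 0)) = 0"
proof -
  have Zc: "\<And>i. i < d \<Longrightarrow> Z i \<in> carrier_mat (n i) (n i)"
    using Z by (auto simp: lie_algebra_def glprod_def)
  have kn: "\<And>i. i < d \<Longrightarrow> k i < n i" using k by (auto simp: multi_idx_def)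
  define R where "R = (if \<exists>c<r. \<forall>i<d. k i = c then 1 else 0 :: real)"
  define F where "F = (\<lambda>t. \<Sum>c<r. \<Prod>i<d. mat_exp (t \<cdot>\<^sub>m Z i) $$ (k i, c))"
  have Fc: "F = (\<lambda>t. R)"
  proof
    fix t :: real
    have "(\<lambda>i. mat_exp (t \<cdot>\<^sub>m Z i)) \<in> stabilizer d n (diag_tensor d n r)"
      using Z by (auto simp: lie_algebra_def)
    then have "tensor_act d n (\<lambda>i. mat_exp (t \<cdot>\<^sub>m Z i)) (diag_tensor d n r) = diag_tensor d n r"
      by (simp add: stabilizer_def)
    then show "F t = R" using stab_iff[OF d rn] k unfolding F_def R_def by auto
  qed
  have D1: "(F has_derivative (\<lambda>h. \<Sum>c<r. \<Sum>i<d. (Z i $$ (k i, c) * h) *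
      (\<Prod>l\<in>{..<d}-{i}. mat_exp (0 \<cdot>\<^sub>m Z l) $$ (k l, c)))) (at 0)"
    unfolding F_def
  proof (intro has_derivative_sum has_derivative_prod)
    fix c i assume c: "c \<in> {..<r}" and i: "i \<in> {..<d}"
    have "c < n i" using c i rn by auto
    then show "((\<lambda>t. mat_exp (t \<cdot>\<^sub>m Z i) $$ (k i, c)) has_derivative (\<lambda>h. Z i $$ (k i, c) * h)) (at 0)"
      using exp_entry_deriv[OF Zc kn, of i c] i by (simp add: has_field_derivative_def)
  qed
  have D2: "(F has_derivative (\<lambda>h. 0)) (at 0)" unfolding Fc by simp
  have "(\<lambda>h. \<Sum>c<r. \<Sum>i<d. (Z i $$ (k i, c) * h) *
      (\<Prod>l\<in>{..<d}-{i}. mat_exp (0 \<cdot>\<^sub>m Z l) $$ (k l, c))) = (\<lambda>h. 0)"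
    by (rule has_derivative_unique[OF D1 D2])
  from fun_cong[OF this, of 1] have "(\<Sum>c<r. \<Sum>i<d. (Z i $$ (k i, c) * 1) *
      (\<Prod>l\<in>{..<d}-{i}. mat_exp (0 \<cdot>\<^sub>m Z l) $$ (k l, c))) = 0"
    by (simp only:)
  moreover have "\<And>c i. c < r \<Longrightarrow> i < d \<Longrightarrow> (\<Prod>l\<in>{..<d}-{i}. mat_exp (0 \<cdot>\<^sub>m Z l) $$ (k l, c)) =
      (\<Prod>l\<in>{..<d}-{i}. if k l = c then 1 else 0)"
    using exp_entry_zero[OF Zc kn] rn by (intro prod.cong) (auto simp: less_le_trans)
  ultimately show ?thesis by simp
qed

lemma lie_hset:
  assumes d: "d \<ge> 3" and rn: "\<forall>i<d. r \<le> n i"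
    and Z: "Z \<in> lie_algebra d n (stabilizer d n (diag_tensor d n r))"
  shows "(\<forall>i<d. \<forall>a<n i. \<forall>j<r. a \<noteq> j \<longrightarrow> Z i $$ (a, j) = 0) \<and> (\<forall>j<r. (\<Sum>i<d. Z i $$ (j, j)) = 0)"
proof (intro conjI allI impI)
  have d0: "d > 0" using d by simp
  fix i0 a j assume i0: "i0 < d" and a: "a < n i0" and j: "j < r" and aj: "a \<noteq> j"
  define k where "k = (\<lambda>i. if i = i0 then a else if i < d then j else 0)"
  have k: "k \<in> multi_idx d n" using a j rn i0 by (auto simp: k_def multi_idx_def less_le_trans)
  have inner: "(\<Sum>i<d. Z i $$ (k i, c) * (\<Prod>l\<in>{..<d}-{i}. if k l = c then 1 else 0)) =
      (if c = j then Z i0 $$ (a, j) else 0)" for c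
  proof -
    have "(\<Sum>i<d. Z i $$ (k i, c) * (\<Prod>l\<in>{..<d}-{i}. if k l = c then 1 else 0)) =
        (\<Sum>i<d. if i = i0 then (if c = j then Z i0 $$ (a, j) else 0) else 0)"
    proof (rule sum.cong[OF refl])
      fix i assume i: "i \<in> {..<d}"
      show "Z i $$ (k i, c) * (\<Prod>l\<in>{..<d}-{i}. if k l = c then 1 else 0) =
          (if i = i0 then (if c = j then Z i0 $$ (a, j) else 0) else 0)"
      proof (cases "i = i0")
        case True
        obtain l where l: "l < d" "l \<noteq> i0" using d by (metis less_le_trans nat_neq_iff numeral_3_eq_3 less_Suc_eq)
        show ?thesis
        proof (cases "c = j")
          case True
          have "(\<Prod>l\<in>{..<d}-{i}. if k l = c then 1 else 0) = (1::real)"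
            by (intro prod.neutral) (auto simp: k_def \<open>i = i0\<close> True)
          then show ?thesis using \<open>i = i0\<close> True by (simp add: k_def)
        next
          case False
          have "l \<in> {..<d}-{i}" "k l \<noteq> c" using l False \<open>i = i0\<close> by (auto simp: k_def)
          then have "(\<Prod>l\<in>{..<d}-{i}. if k l = c then 1 else 0) = (0::real)"
            by (intro prod_zero) auto
          then show ?thesis using \<open>i = i0\<close> False by simp
        qed
      next
        case False
        obtain l where l: "l < d" "l \<noteq> i0" "l \<noteq> i"
        proof -
          have "{0,1,2} - {i0, i} \<noteq> ({} :: nat set)"
          proof
            assume "{0,1,2} - {i0, i} = ({} :: nat set)"
            then have "{0,1,2} \<subseteq> {i0, i}" by blast
            then have "card {0,1,2::nat} \<le> card {i0, i}" by (intro card_mono) auto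
            moreover have "card {i0, i} \<le> 2" by (rule order_trans[OF card_insert_le_m1]) auto
            ultimately show False by simp
          qed
          then obtain l where "l \<in> {0,1,2} - {i0, i}" by blast
          then have "l < 3" "l \<noteq> i0" "l \<noteq> i" by auto
          then show ?thesis using that[of l] d by simp
        qed
        have "(\<Prod>l\<in>{..<d}-{i}. if k l = c then 1 else 0) = (0::real)"
        proof (cases "c = a")
          case True
          then have "k l \<noteq> c" using l aj by (auto simp: k_def)
          then show ?thesis using l by (intro prod_zero) auto
        next
          case False
          then have "k i0 \<noteq> c" by (simp add: k_def)
          then show ?thesis using i0 \<open>i \<noteq> i0\<close> by (intro prod_zero) (auto intro!: bexI[of _ i0])
        qed
        then show ?thesis using False by simp
      qed
    qed
    also have "\<dots> = (if c = j then Z i0 $$ (a, j) else 0)"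
      using i0 by (simp add: sum.delta)
    finally show ?thesis .
  qed
  have "(\<Sum>c<r. \<Sum>i<d. Z i $$ (k i, c) * (\<Prod>l\<in>{..<d}-{i}. if k l = c then 1 else 0)) = 0"
    by (rule lie_deriv_identity[OF d0 rn Z k])
  then have "(\<Sum>c<r. if c = j then Z i0 $$ (a, j) else 0) = 0" using inner by simp
  then show "Z i0 $$ (a, j) = 0" using j by (simp add: sum.delta)
next
  have d0: "d > 0" using d by simp
  fix j assume j: "j < r"
  define k where "k = cst d j"
  have k: "k \<in> multi_idx d n" using j rn by (auto simp: k_def cst_def multi_idx_def less_le_trans)
  have inner: "(\<Sum>i<d. Z i $$ (k i, c) * (\<Prod>l\<in>{..<d}-{i}. if k l = c then 1 else 0)) =
      (if c = j then (\<Sum>i<d. Z i $$ (j, j)) else 0)" for c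
  proof (cases "c = j")
    case True
    have "(\<Prod>l\<in>{..<d}-{i}. if k l = c then 1 else 0) = (1::real)" for i
      by (intro prod.neutral) (auto simp: k_def cst_def True)
    then show ?thesis using True by (auto simp: k_def cst_def intro!: sum.cong)
  next
    case False
    have "(\<Prod>l\<in>{..<d}-{i}. if k l = c then 1 else 0) = (0::real)" if i: "i < d" for i
    proof -
      obtain l where l: "l < d" "l \<noteq> i" using d by (metis less_le_trans nat_neq_iff numeral_3_eq_3 less_Suc_eq)
      then show ?thesis using False by (intro prod_zero) (auto simp: k_def cst_def intro!: bexI[of _ l])
    qed
    then show ?thesis using False by (simp del: prod_zero_iff)
  qed
  have "(\<Sum>c<r. \<Sum>i<d. Z i $$ (k i, c) * (\<Prod>l\<in>{..<d}-{i}. if k l = c then 1 else 0)) = 0"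
    by (rule lie_deriv_identity[OF d0 rn Z k])
  then have "(\<Sum>c<r. if c = j then (\<Sum>i<d. Z i $$ (j, j)) else 0) = 0" using inner by simp
  then show "(\<Sum>i<d. Z i $$ (j, j)) = 0" using j by (simp add: sum.delta)
qed


lemma pow_sqzero:
  fixes M :: "real mat"
  assumes M: "M \<in> carrier_mat N N" "M * M = 0\<^sub>m N N"
  shows "M ^\<^sub>m (Suc (Suc k)) = 0\<^sub>m N N"
proof (induction k)
  case 0
  then show ?case using M by simp
next
  case (Suc k)
  then show ?case using M by (simp del: pow_mat.simps add: pow_mat.simps(2)[of M "Suc (Suc k)"])
qed

lemma exp_sqzero:
  fixes M :: "real mat"
  assumes M: "M \<in> carrier_mat N N" "M * M = 0\<^sub>m N N"
  shows "mat_exp (t \<cdot>\<^sub>m M) = 1\<^sub>m N + t \<cdot>\<^sub>m M"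
proof (rule eq_matI)
  show "dim_row (mat_exp (t \<cdot>\<^sub>m M)) = dim_row (1\<^sub>m N + t \<cdot>\<^sub>m M)"
    using M by (simp add: mat_exp_def)
  show "dim_col (mat_exp (t \<cdot>\<^sub>m M)) = dim_col (1\<^sub>m N + t \<cdot>\<^sub>m M)"
    using M by (simp add: mat_exp_def)
  fix x y assume "x < dim_row (1\<^sub>m N + t \<cdot>\<^sub>m M)" "y < dim_col (1\<^sub>m N + t \<cdot>\<^sub>m M)"
  then have xy: "x < N" "y < N" using M by auto
  have "mat_exp (t \<cdot>\<^sub>m M) $$ (x, y) = (\<Sum>k. ((M ^\<^sub>m k) $$ (x, y) / fact k) * t ^ k)"
    by (rule exp_entry[OF M(1) xy])
  also have "\<dots> = (\<Sum>k<2. ((M ^\<^sub>m k) $$ (x, y) / fact k) * t ^ k)"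
  proof (rule suminf_finite)
    fix k assume "k \<notin> {..<2::nat}"
    then obtain j where "k = Suc (Suc j)" by (metis lessThan_iff less_2_cases_iff not_less_eq_eq Suc_le_D le_SucE less_Suc_eq_le numeral_2_eq_2 not_less)
    then show "(M ^\<^sub>m k) $$ (x, y) / fact k * t ^ k = 0" using pow_sqzero[OF M, of j] xy by simp
  qed simp
  also have "\<dots> = (1\<^sub>m N + t \<cdot>\<^sub>m M) $$ (x, y)"
    using M xy by (simp add: numeral_2_eq_2)
  finally show "mat_exp (t \<cdot>\<^sub>m M) $$ (x, y) = (1\<^sub>m N + t \<cdot>\<^sub>m M) $$ (x, y)" .
qed

lemma sqzero_prod:
  fixes M :: "real mat"
  assumes M: "M \<in> carrier_mat N N" "M * M = 0\<^sub>m N N"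
  shows "(1\<^sub>m N + M) * (1\<^sub>m N - M) = 1\<^sub>m N" "(1\<^sub>m N - M) * (1\<^sub>m N + M) = 1\<^sub>m N"
proof -
  have c: "1\<^sub>m N - M \<in> carrier_mat N N" "1\<^sub>m N + M \<in> carrier_mat N N" using M by (auto intro: minus_carrier_mat)
  have "(1\<^sub>m N + M) * (1\<^sub>m N - M) = 1\<^sub>m N * (1\<^sub>m N - M) + M * (1\<^sub>m N - M)"
    by (rule add_mult_distrib_mat[OF one_carrier_mat M(1) c(1)])
  also have "\<dots> = (1\<^sub>m N - M) + (M * 1\<^sub>m N - M * M)"
    using mult_minus_distrib_mat[OF M(1) one_carrier_mat M(1)] M(1) by simp
  also have "\<dots> = 1\<^sub>m N"
    using M by (intro eq_matI) auto
  finally show "(1\<^sub>m N + M) * (1\<^sub>m N - M) = 1\<^sub>m N" .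
  have "(1\<^sub>m N - M) * (1\<^sub>m N + M) = 1\<^sub>m N * (1\<^sub>m N + M) - M * (1\<^sub>m N + M)"
    by (rule minus_mult_distrib_mat[OF one_carrier_mat M(1) c(2)])
  also have "\<dots> = (1\<^sub>m N + M) - (M * 1\<^sub>m N + M * M)"
    using mult_add_distrib_mat[OF M(1) one_carrier_mat M(1)] M(1) by simp
  also have "\<dots> = 1\<^sub>m N"
    using M by (intro eq_matI) auto
  finally show "(1\<^sub>m N - M) * (1\<^sub>m N + M) = 1\<^sub>m N" .
qed

lemma mat_inv_unique:
  fixes A B :: "real mat"
  assumes A: "A \<in> carrier_mat N N" and B: "B \<in> carrier_mat N N" "A * B = 1\<^sub>m N" "B * A = 1\<^sub>m N"
  shows "mat_inv A = B" "invertible_mat A"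
proof -
  have "(SOME B. B \<in> carrier_mat (dim_row A) (dim_row A) \<and> A * B = 1\<^sub>m (dim_row A) \<and> B * A = 1\<^sub>m (dim_row A)) = B"
  proof (rule some_equality)
    show "B \<in> carrier_mat (dim_row A) (dim_row A) \<and> A * B = 1\<^sub>m (dim_row A) \<and> B * A = 1\<^sub>m (dim_row A)"
      using A B by auto
    fix B' assume h: "B' \<in> carrier_mat (dim_row A) (dim_row A) \<and> A * B' = 1\<^sub>m (dim_row A) \<and> B' * A = 1\<^sub>m (dim_row A)"
    then have B': "B' \<in> carrier_mat N N" "A * B' = 1\<^sub>m N" "B' * A = 1\<^sub>m N" using A by auto
    have "B' = B' * (A * B)" using B B' right_mult_one_mat[OF B'(1)] by simp
    also have "\<dots> = (B' * A) * B" using assoc_mult_mat[OF B'(1) A B(1)] by simp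
    also have "\<dots> = B" using B B' left_mult_one_mat[OF B(1)] by simp
    finally show "B' = B" .
  qed
  then show "mat_inv A = B" by (simp add: mat_inv_def)
  show "invertible_mat A" unfolding invertible_mat_def inverts_mat_def
    using A B by (auto simp: square_mat.simps intro!: exI[of _ B])
qed

lemma stab_colform:
  assumes d: "d > 0" and rn: "\<forall>i<d. r \<le> n i"
    and g: "\<And>i x c. i < d \<Longrightarrow> x < n i \<Longrightarrow> c < r \<Longrightarrow> g i $$ (x, c) = (if x = c then lam i c else 0)"
    and lam: "\<And>c. c < r \<Longrightarrow> (\<Prod>i<d. lam i c) = 1"
  shows "tensor_act d n g (diag_tensor d n r) = diag_tensor d n r"
  unfolding stab_iff[OF d rn]
proof
  fix k assume k: "k \<in> multi_idx d n"
  have kn: "\<And>i. i < d \<Longrightarrow> k i < n i" using k by (auto simp: multi_idx_def)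
  have "(\<Sum>c<r. \<Prod>i<d. g i $$ (k i, c)) = (\<Sum>c<r. if \<forall>i<d. k i = c then 1 else 0)"
  proof (rule sum.cong[OF refl])
    fix c assume c: "c \<in> {..<r}"
    have "(\<Prod>i<d. g i $$ (k i, c)) = (\<Prod>i<d. if k i = c then lam i c else 0)"
      using g kn c by (intro prod.cong) auto
    also have "\<dots> = (if \<forall>i<d. k i = c then 1 else 0)"
    proof (cases "\<forall>i<d. k i = c")
      case True
      have "(\<Prod>i<d. if k i = c then lam i c else 0) = (\<Prod>i<d. lam i c)"
        using True by (intro prod.cong) auto
      then show ?thesis using lam c True by simp
    next
      case False
      then obtain i where "i < d" "k i \<noteq> c" by auto
      then show ?thesis by (auto intro!: prod_zero bexI[of _ i] simp del: prod_zero_iff)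
    qed
    finally show "(\<Prod>i<d. g i $$ (k i, c)) = (if \<forall>i<d. k i = c then 1 else 0)" .
  qed
  also have "\<dots> = (if \<exists>c<r. \<forall>i<d. k i = c then 1 else 0)"
  proof (cases "\<exists>c<r. \<forall>i<d. k i = c")
    case True
    then obtain c0 where c0: "c0 < r" "\<forall>i<d. k i = c0" by auto
    have "(\<Sum>c<r. if \<forall>i<d. k i = c then 1 else 0) = (\<Sum>c<r. if c = c0 then 1 else (0::real))"
      using c0 d by (intro sum.cong) auto
    then show ?thesis using c0 True by simp
  next
    case False
    then show ?thesis by (intro trans[OF sum.neutral]) auto
  qed
  finally show "(\<Sum>c<r. \<Prod>i<d. g i $$ (k i, c)) = (if \<exists>c<r. \<forall>i<d. k i = c then 1 else 0)" .
qed

lemma unip_in_H: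
  assumes d: "d > 0" and rn: "\<forall>i<d. r \<le> n i"
    and M: "\<And>i. i < d \<Longrightarrow> M i \<in> carrier_mat (n i) (n i) \<and> M i * M i = 0\<^sub>m (n i) (n i) \<and>
         (\<forall>x<n i. \<forall>c<r. M i $$ (x, c) = 0)"
    and g: "g = (\<lambda>i. if i < d then 1\<^sub>m (n i) + M i else 1\<^sub>m 0)"
  shows "g \<in> stabilizer d n (diag_tensor d n r)"
proof -
  have "g \<in> GLprod d n"
    unfolding GLprod_def
  proof (intro CollectI conjI allI impI)
    fix i assume i: "i < d"
    show "g i \<in> carrier_mat (n i) (n i)" using M[OF i] i g by simp
    show "invertible_mat (g i)"
      using mat_inv_unique(2)[of "g i" "n i" "1\<^sub>m (n i) - M i"] sqzero_prod[of "M i" "n i"] M[OF i] i g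
      by (auto intro: minus_carrier_mat)
  next
    fix i assume "d \<le> i" then show "g i = 1\<^sub>m 0" using g by simp
  qed
  moreover have "tensor_act d n g (diag_tensor d n r) = diag_tensor d n r"
  proof (rule stab_colform[OF d rn, where lam = "\<lambda>i c. 1"])
    fix i x c assume "i < d" "x < n i" "c < r"
    then show "g i $$ (x, c) = (if x = c then 1 else 0)"
      using M[of i] g rn by auto
  qed simp
  ultimately show ?thesis by (simp add: stabilizer_def)
qed

lemma sqzero_in_lie:
  assumes d: "d > 0" and rn: "\<forall>i<d. r \<le> n i"
    and Z: "Z \<in> glprod d n"
    and M: "\<And>i. i < d \<Longrightarrow> Z i * Z i = 0\<^sub>m (n i) (n i) \<and> (\<forall>x<n i. \<forall>c<r. Z i $$ (x, c) = 0)"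
  shows "Z \<in> lie_algebra d n (stabilizer d n (diag_tensor d n r))"
  unfolding lie_algebra_def
proof (intro CollectI conjI allI Z)
  fix t :: real
  have Zc: "\<And>i. i < d \<Longrightarrow> Z i \<in> carrier_mat (n i) (n i)" using Z by (auto simp: glprod_def)
  have "(\<lambda>i. mat_exp (t \<cdot>\<^sub>m Z i)) = (\<lambda>i. if i < d then 1\<^sub>m (n i) + t \<cdot>\<^sub>m Z i else 1\<^sub>m 0)"
  proof
    fix i show "mat_exp (t \<cdot>\<^sub>m Z i) = (if i < d then 1\<^sub>m (n i) + t \<cdot>\<^sub>m Z i else 1\<^sub>m 0)"
    proof (cases "i < d")
      case True
      then show ?thesis using exp_sqzero[of "Z i" "n i" t] Zc M by simp
    next
      case False
      then have "Z i = 0\<^sub>m 0 0" using Z by (auto simp: glprod_def)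
      then show ?thesis using False by (intro eq_matI) (auto simp: mat_exp_def)
    qed
  qed
  also have "\<dots> \<in> stabilizer d n (diag_tensor d n r)"
  proof (rule unip_in_H[OF d rn _ refl])
    fix i assume i: "i < d"
    have "(t \<cdot>\<^sub>m Z i) * (t \<cdot>\<^sub>m Z i) = t \<cdot>\<^sub>m (Z i * (t \<cdot>\<^sub>m Z i))"
      by (rule mult_smult_assoc_mat[OF Zc[OF i] smult_carrier_mat[OF Zc[OF i]]])
    also have "Z i * (t \<cdot>\<^sub>m Z i) = t \<cdot>\<^sub>m (Z i * Z i)"
      by (rule mult_smult_distrib[OF Zc[OF i] Zc[OF i]])
    finally have "(t \<cdot>\<^sub>m Z i) * (t \<cdot>\<^sub>m Z i) = t \<cdot>\<^sub>m (t \<cdot>\<^sub>m (Z i * Z i))" .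
    then show "t \<cdot>\<^sub>m Z i \<in> carrier_mat (n i) (n i) \<and> t \<cdot>\<^sub>m Z i * (t \<cdot>\<^sub>m Z i) = 0\<^sub>m (n i) (n i) \<and>
         (\<forall>x<n i. \<forall>c<r. (t \<cdot>\<^sub>m Z i) $$ (x, c) = 0)"
      using Zc[OF i] M[OF i] rn i by (auto intro!: eq_matI)
  qed
  finally show "(\<lambda>i. mat_exp (t \<cdot>\<^sub>m Z i)) \<in> stabilizer d n (diag_tensor d n r)" .
qed


definition emat :: "nat \<Rightarrow> nat \<Rightarrow> nat \<Rightarrow> real mat" where
  "emat N a b = mat N N (\<lambda>(x, y). if x = a \<and> y = b then 1 else 0)"

lemma emat_carrier[simp]: "emat N a b \<in> carrier_mat N N"
  by (simp add: emat_def)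

lemma emat_dims[simp]: "dim_row (emat N a b) = N" "dim_col (emat N a b) = N"
  by (simp_all add: emat_def)

lemma emat_index[simp]: "x < N \<Longrightarrow> y < N \<Longrightarrow> emat N a b $$ (x, y) = (if x = a \<and> y = b then 1 else 0)"
  by (simp add: emat_def)

lemma emat_left:
  assumes A: "A \<in> carrier_mat N N" and xy: "x < N" "y < N" and b: "b < N"
  shows "(emat N a b * A) $$ (x, y) = (if x = a then A $$ (b, y) else 0)"
proof -
  have "(emat N a b * A) $$ (x, y) = (\<Sum>k<N. emat N a b $$ (x, k) * A $$ (k, y))"
    by (rule mult_entry[OF emat_carrier A xy])
  also have "\<dots> = (\<Sum>k<N. if k = b then (if x = a then A $$ (b, y) else 0) else 0)"
    using xy by (intro sum.cong) auto
  also have "\<dots> = (if x = a then A $$ (b, y) else 0)" using b by (simp add: sum.delta)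
  finally show ?thesis .
qed

lemma emat_right:
  assumes A: "A \<in> carrier_mat N N" and xy: "x < N" "y < N" and a: "a < N"
  shows "(A * emat N a b) $$ (x, y) = (if y = b then A $$ (x, a) else 0)"
proof -
  have "(A * emat N a b) $$ (x, y) = (\<Sum>k<N. A $$ (x, k) * emat N a b $$ (k, y))"
    by (rule mult_entry[OF A emat_carrier xy])
  also have "\<dots> = (\<Sum>k<N. if k = a then (if y = b then A $$ (x, a) else 0) else 0)"
    using xy by (intro sum.cong) auto
  also have "\<dots> = (if y = b then A $$ (x, a) else 0)" using a by (simp add: sum.delta)
  finally show ?thesis .
qed

lemma conjE_entry:
  assumes A: "A \<in> carrier_mat N N" and b: "b < N" "b > 0" and xy: "x < N" "y < N"
  shows "((1\<^sub>m N + emat N 0 b) * A * mat_inv (1\<^sub>m N + emat N 0 b) + (-1) \<cdot>\<^sub>m A) $$ (x, y) =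
    (if x = 0 then A $$ (b, y) else 0) - (if y = b then A $$ (x, 0) + (if x = 0 then A $$ (b, 0) else 0) else 0)"
proof -
  let ?E = "emat N 0 b"
  have b0: "0 < N" using b by simp
  have EE: "?E * ?E = 0\<^sub>m N N"
  proof (rule eq_matI)
    fix i j assume "i < dim_row (0\<^sub>m N N)" "j < dim_col (0\<^sub>m N N)"
    then show "(?E * ?E) $$ (i, j) = 0\<^sub>m N N $$ (i, j)"
      using emat_left[OF emat_carrier _ _ b(1), of i j 0 0] b by auto
  qed auto
  have inv: "mat_inv (1\<^sub>m N + ?E) = 1\<^sub>m N - ?E"
    using mat_inv_unique(1)[of "1\<^sub>m N + ?E" N "1\<^sub>m N - ?E"] sqzero_prod[OF emat_carrier EE]
      minus_carrier_mat[OF emat_carrier, of "1\<^sub>m N"]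
    by auto
  have "(1\<^sub>m N + ?E) * A = 1\<^sub>m N * A + ?E * A"
    by (rule add_mult_distrib_mat[OF one_carrier_mat emat_carrier A])
  also have "\<dots> = A + ?E * A" using left_mult_one_mat[OF A] by simp
  finally have s1: "(1\<^sub>m N + ?E) * A = A + ?E * A" .
  have Bc: "A + ?E * A \<in> carrier_mat N N" using A by auto
  have "(A + ?E * A) * (1\<^sub>m N - ?E) = (A + ?E * A) * 1\<^sub>m N - (A + ?E * A) * ?E"
    by (rule mult_minus_distrib_mat[OF Bc one_carrier_mat emat_carrier])
  also have "\<dots> = (A + ?E * A) - (A + ?E * A) * ?E" using right_mult_one_mat[OF Bc] by simp
  finally have s2: "(A + ?E * A) * (1\<^sub>m N - ?E) = (A + ?E * A) - (A + ?E * A) * ?E" .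
  have e1: "(A + ?E * A) $$ (x, y) = A $$ (x, y) + (if x = 0 then A $$ (b, y) else 0)"
    using emat_left[OF A xy b(1)] A xy by simp
  have e2: "((A + ?E * A) * ?E) $$ (x, y) = (if y = b then A $$ (x, 0) + (if x = 0 then A $$ (b, 0) else 0) else 0)"
    using emat_right[OF Bc xy b0] emat_left[OF A xy(1) b0 b(1)] A xy by simp
  show ?thesis
    unfolding inv s1 s2 using e1 e2 A xy by simp
qed


lemma mat_inv_one: "mat_inv (1\<^sub>m m :: real mat) = 1\<^sub>m m"
  using mat_inv_unique(1)[of "1\<^sub>m m" m "1\<^sub>m m"] by simp

lemma cd_formula:
  assumes i0: "i0 < d" and b: "b < n i0" "b > 0" and Z: "Z \<in> glprod d n"
    and u: "u = (\<lambda>i. if i < d then 1\<^sub>m (n i) + (if i = i0 then emat (n i0) 0 b else 0\<^sub>m (n i) (n i)) else 1\<^sub>m 0)"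
  shows "tup_add (tup_conj u Z) (tup_smult (-1) Z) = (\<lambda>i. if i = i0 then
      mat (n i0) (n i0) (\<lambda>(x, y). (if x = 0 then Z i0 $$ (b, y) else 0) -
         (if y = b then Z i0 $$ (x, 0) + (if x = 0 then Z i0 $$ (b, 0) else 0) else 0))
      else if i < d then 0\<^sub>m (n i) (n i) else 0\<^sub>m 0 0)"
proof
  fix i
  have Zc: "\<And>i. i < d \<Longrightarrow> Z i \<in> carrier_mat (n i) (n i)" and Zd: "\<And>i. d \<le> i \<Longrightarrow> Z i = 0\<^sub>m 0 0"
    using Z by (auto simp: glprod_def)
  show "tup_add (tup_conj u Z) (tup_smult (-1) Z) i = (if i = i0 then
      mat (n i0) (n i0) (\<lambda>(x, y). (if x = 0 then Z i0 $$ (b, y) else 0) -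
         (if y = b then Z i0 $$ (x, 0) + (if x = 0 then Z i0 $$ (b, 0) else 0) else 0))
      else if i < d then 0\<^sub>m (n i) (n i) else 0\<^sub>m 0 0)"
  proof (cases "i = i0")
    case True
    have ui: "u i0 = 1\<^sub>m (n i0) + emat (n i0) 0 b" using u i0 by simp
    show ?thesis
      unfolding tup_add_def tup_smult_def tup_conj_def True ui
      by (rule eq_matI) (use conjE_entry[OF Zc[OF i0] b] Zc[OF i0] in auto)
  next
    case False
    show ?thesis
    proof (cases "i < d")
      case True
      have ui: "u i = 1\<^sub>m (n i)" using u True False by simp
      show ?thesis
        unfolding tup_add_def tup_smult_def tup_conj_def ui mat_inv_one
        using Zc[OF True] True False by (intro eq_matI) auto
    next
      case False2: False
      show ?thesis
        unfolding tup_add_def tup_smult_def tup_conj_def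
        using Zd[of i] False2 False by (intro eq_matI) auto
    qed
  qed
qed

lemma not_reductive:
  assumes d: "d \<ge> 3" and rn: "\<forall>i<d. r \<le> n i" and r0: "r > 0" and i0: "i0 < d" "r < n i0"
  shows "\<not> reductive d n (stabilizer d n (diag_tensor d n r))"
proof
  define H where "H = stabilizer d n (diag_tensor d n r)"
  define L where "L = lie_algebra d n H"
  have d0: "d > 0" using d by simp
  assume "reductive d n (stabilizer d n (diag_tensor d n r))"
  then obtain p where sub: "is_subspace_gl d n p" and cap: "p \<inter> L = {tup_zero d n}"
    and dec: "\<forall>Z\<in>glprod d n. \<exists>X\<in>p. \<exists>Y\<in>L. Z = tup_add X Y"
    and inv: "\<forall>h\<in>H. \<forall>Z\<in>p. tup_conj h Z \<in> p"
    unfolding reductive_def H_def L_def by blast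
  have pg: "p \<subseteq> glprod d n" using sub by (simp add: is_subspace_gl_def)
  have padd: "\<And>X Y. X \<in> p \<Longrightarrow> Y \<in> p \<Longrightarrow> tup_add X Y \<in> p"
    and psm: "\<And>c X. X \<in> p \<Longrightarrow> tup_smult c X \<in> p" using sub by (auto simp: is_subspace_gl_def)
  define N where "N = n i0"
  define b where "b = r"
  have bN: "b < N" "b > 0" using i0 r0 by (auto simp: N_def b_def)
  define y where "y = (\<lambda>i. if i = i0 then emat N b 0 else if i < d then 0\<^sub>m (n i) (n i) else 0\<^sub>m 0 0)"
  have yg: "y \<in> glprod d n" using i0 by (auto simp: glprod_def y_def N_def)
  obtain X W where X: "X \<in> p" and W: "W \<in> L" and yXW: "y = tup_add X W" using dec yg by blast
  have Xg: "X \<in> glprod d n" using X pg by auto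
  have Wg: "W \<in> glprod d n" using W by (auto simp: L_def lie_algebra_def)
  have W0: "W i0 $$ (b, 0) = 0"
    using lie_hset[OF d rn W[unfolded L_def H_def]] i0 bN r0 by (auto simp: N_def)
  define F where "F = X i0"
  have Fc: "F \<in> carrier_mat N N" using Xg i0 by (auto simp: glprod_def F_def N_def)
  have Wc: "W i0 \<in> carrier_mat N N" using Wg i0 by (auto simp: glprod_def N_def)
  have "y i0 $$ (b, 0) = (X i0 + W i0) $$ (b, 0)" using yXW by (simp add: tup_add_def)
  then have F1: "F $$ (b, 0) = 1" using W0 Fc Wc bN by (simp add: y_def F_def)
  define u where "u = (\<lambda>i. if i < d then 1\<^sub>m (n i) + (if i = i0 then emat (n i0) 0 b else 0\<^sub>m (n i) (n i)) else 1\<^sub>m 0)"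
  have uH: "u \<in> H" unfolding H_def
  proof (rule unip_in_H[OF d0 rn _ u_def])
    fix i assume i: "i < d"
    show "(if i = i0 then emat (n i0) 0 b else 0\<^sub>m (n i) (n i)) \<in> carrier_mat (n i) (n i) \<and>
      (if i = i0 then emat (n i0) 0 b else 0\<^sub>m (n i) (n i)) * (if i = i0 then emat (n i0) 0 b else 0\<^sub>m (n i) (n i)) = 0\<^sub>m (n i) (n i) \<and>
      (\<forall>x<n i. \<forall>c<r. (if i = i0 then emat (n i0) 0 b else 0\<^sub>m (n i) (n i)) $$ (x, c) = 0)"
    proof (cases "i = i0")
      case True
      have EE: "emat (n i0) 0 b * emat (n i0) 0 b = 0\<^sub>m (n i0) (n i0)"
      proof (rule eq_matI)
        fix x y assume "x < dim_row (0\<^sub>m (n i0) (n i0))" "y < dim_col (0\<^sub>m (n i0) (n i0))"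
        then show "(emat (n i0) 0 b * emat (n i0) 0 b) $$ (x, y) = 0\<^sub>m (n i0) (n i0) $$ (x, y)"
          using emat_left[OF emat_carrier _ _ bN(1)[unfolded N_def], of x y 0 0] bN by (auto simp: N_def)
      qed auto
      then show ?thesis using True i0(2) by (auto simp: b_def)
    next
      case False
      then show ?thesis using i rn by (auto dest!: spec[of _ i])
    qed
  qed
  define cd where "cd = (\<lambda>Z. tup_add (tup_conj u Z) (tup_smult (-1) Z))"
  have cdp: "\<And>Z. Z \<in> p \<Longrightarrow> cd Z \<in> p" unfolding cd_def using inv uH padd psm by blast
  define Q where "Q = cd X"
  have Qp: "Q \<in> p" using cdp X by (simp add: Q_def)
  have Qg: "Q \<in> glprod d n" using Qp pg by auto
  have Qf: "Q = (\<lambda>i. if i = i0 then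
      mat (n i0) (n i0) (\<lambda>(x, y). (if x = 0 then X i0 $$ (b, y) else 0) -
         (if y = b then X i0 $$ (x, 0) + (if x = 0 then X i0 $$ (b, 0) else 0) else 0))
      else if i < d then 0\<^sub>m (n i) (n i) else 0\<^sub>m 0 0)"
    unfolding Q_def cd_def by (rule cd_formula[OF i0(1) bN[unfolded N_def] Xg u_def])
  define Q' where "Q' = cd Q"
  have Q'p: "Q' \<in> p" using cdp Qp by (simp add: Q'_def)
  have Q'f: "Q' = (\<lambda>i. if i = i0 then
      mat (n i0) (n i0) (\<lambda>(x, y). (if x = 0 then Q i0 $$ (b, y) else 0) -
         (if y = b then Q i0 $$ (x, 0) + (if x = 0 then Q i0 $$ (b, 0) else 0) else 0))
      else if i < d then 0\<^sub>m (n i) (n i) else 0\<^sub>m 0 0)"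
    unfolding Q'_def cd_def by (rule cd_formula[OF i0(1) bN[unfolded N_def] Qg u_def])
  define V where "V = (\<lambda>i. if i = i0 then (-2) \<cdot>\<^sub>m emat N 0 b else if i < d then 0\<^sub>m (n i) (n i) else 0\<^sub>m 0 0)"
  have Q'V: "Q' = V"
  proof
    fix i
    show "Q' i = V i"
    proof (cases "i = i0")
      case True
      have "mat (n i0) (n i0) (\<lambda>(x, y). (if x = 0 then Q i0 $$ (b, y) else 0) -
         (if y = b then Q i0 $$ (x, 0) + (if x = 0 then Q i0 $$ (b, 0) else 0) else 0)) = (-2) \<cdot>\<^sub>m emat N 0 b"
      proof (rule eq_matI)
        fix x y assume xy: "x < dim_row ((-2) \<cdot>\<^sub>m emat N 0 b)" "y < dim_col ((-2) \<cdot>\<^sub>m emat N 0 b)"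
        then have xy': "x < N" "y < N" by auto
        have "Q i0 $$ (b, y) = (if y = b then - 1 else 0)"
          using Qf xy' bN F1 by (simp add: N_def F_def)
        moreover have "Q i0 $$ (x, 0) = (if x = 0 then 1 else 0)"
          using Qf xy' bN F1 by (simp add: N_def F_def)
        moreover have "Q i0 $$ (b, 0) = 0"
          using Qf xy' bN F1 by (simp add: N_def F_def)
        ultimately show "mat (n i0) (n i0) (\<lambda>(x, y). (if x = 0 then Q i0 $$ (b, y) else 0) -
         (if y = b then Q i0 $$ (x, 0) + (if x = 0 then Q i0 $$ (b, 0) else 0) else 0)) $$ (x, y) =
          ((-2) \<cdot>\<^sub>m emat N 0 b) $$ (x, y)"
          using xy' by (auto simp: N_def)
      qed (auto simp: N_def)
      then show ?thesis using True Q'f V_def by simp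
    next
      case False
      then show ?thesis using Q'f V_def by simp
    qed
  qed
  have VL: "V \<in> L" unfolding L_def H_def
  proof (rule sqzero_in_lie[OF d0 rn])
    show "V \<in> glprod d n" using i0 by (auto simp: V_def glprod_def N_def)
    fix i assume i: "i < d"
    show "V i * V i = 0\<^sub>m (n i) (n i) \<and> (\<forall>x<n i. \<forall>c<r. V i $$ (x, c) = 0)"
    proof (cases "i = i0")
      case True
      have EE: "emat N 0 b * emat N 0 b = 0\<^sub>m N N"
      proof (rule eq_matI)
        fix x y assume "x < dim_row (0\<^sub>m N N)" "y < dim_col (0\<^sub>m N N)"
        then show "(emat N 0 b * emat N 0 b) $$ (x, y) = 0\<^sub>m N N $$ (x, y)"
          using emat_left[OF emat_carrier _ _ bN(1), of x y 0 0] bN by auto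
      qed auto
      have "(-2) \<cdot>\<^sub>m emat N 0 b * ((-2) \<cdot>\<^sub>m emat N 0 b) = (-2) \<cdot>\<^sub>m (emat N 0 b * ((-2) \<cdot>\<^sub>m emat N 0 b))"
        by (rule mult_smult_assoc_mat[OF emat_carrier smult_carrier_mat[OF emat_carrier]])
      also have "emat N 0 b * ((-2) \<cdot>\<^sub>m emat N 0 b) = (-2) \<cdot>\<^sub>m (emat N 0 b * emat N 0 b)"
        by (rule mult_smult_distrib[OF emat_carrier emat_carrier])
      finally have "(-2) \<cdot>\<^sub>m emat N 0 b * ((-2) \<cdot>\<^sub>m emat N 0 b) = 0\<^sub>m N N"
        unfolding EE by (intro eq_matI) auto
      then show ?thesis using True i0(2) by (auto simp: V_def N_def b_def)
    next
      case False
      then show ?thesis using i rn by (auto simp: V_def dest!: spec[of _ i])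
    qed
  qed
  have "V \<in> p \<inter> L" using Q'p Q'V VL by simp
  then have "V = tup_zero d n" using cap by auto
  then have "V i0 $$ (0, b) = tup_zero d n i0 $$ (0, b)" by simp
  then show False using i0 bN by (simp add: V_def tup_zero_def N_def)
qed


lemma inv_spec:
  fixes A :: "real mat"
  assumes A: "A \<in> carrier_mat N N" "invertible_mat A"
  shows "mat_inv A \<in> carrier_mat N N \<and> A * mat_inv A = 1\<^sub>m N \<and> mat_inv A * A = 1\<^sub>m N"
proof -
  obtain B where B: "A * B = 1\<^sub>m (dim_row A)" "B * A = 1\<^sub>m (dim_row B)"
    using A(2) unfolding invertible_mat_def inverts_mat_def by blast
  have "dim_col B = N" using B(1) A(1) by (metis index_mult_mat(3) index_one_mat(3) carrier_matD(1))
  moreover have "dim_row B = N" using B(2) A(1) by (metis index_mult_mat(3) index_one_mat(3) carrier_matD(2))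
  ultimately have Bc: "B \<in> carrier_mat N N" by auto
  have "mat_inv A = B" using mat_inv_unique(1)[OF A(1) Bc] B A(1) Bc by auto
  then show ?thesis using B A(1) Bc by auto
qed

lemma col_nonzero:
  fixes A :: "real mat"
  assumes A: "A \<in> carrier_mat N N" "invertible_mat A" and c: "c < N"
  shows "\<exists>a<N. A $$ (a, c) \<noteq> 0"
proof (rule ccontr)
  assume "\<not> (\<exists>a<N. A $$ (a, c) \<noteq> 0)"
  then have z: "\<forall>a<N. A $$ (a, c) = 0" by auto
  have s: "mat_inv A \<in> carrier_mat N N" "mat_inv A * A = 1\<^sub>m N" using inv_spec[OF A] by auto
  have "(mat_inv A * A) $$ (c, c) = (\<Sum>e<N. mat_inv A $$ (c, e) * A $$ (e, c))"
    by (rule mult_entry[OF s(1) A(1) c c])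
  also have "\<dots> = 0" using z by simp
  finally show False using s c by simp
qed

lemma stab_eq:
  assumes d: "d > 0" and rn: "\<forall>i<d. r \<le> n i" and g: "g \<in> stabilizer d n (diag_tensor d n r)"
    and k: "k \<in> multi_idx d n"
  shows "(\<Sum>c<r. \<Prod>i<d. g i $$ (k i, c)) = (if \<exists>c<r. \<forall>i<d. k i = c then 1 else 0)"
  using g stab_iff[OF d rn] k by (auto simp: stabilizer_def)

lemma stab_F:
  assumes d: "d > 0" and nr: "\<forall>i<d. n i = r" and g: "g \<in> stabilizer d n (diag_tensor d n r)"
    and s: "s < d" and k: "k \<in> multi_idx d n"
    and pq: "p < d" "q < d" "p \<noteq> s" "q \<noteq> s" "k p \<noteq> k q" and c: "c < r"
  shows "(\<Prod>i\<in>{..<d}-{s}. g i $$ (k i, c)) = 0"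
proof -
  have rn: "\<forall>i<d. r \<le> n i" using nr by simp
  define w where "w = (\<lambda>c. \<Prod>i\<in>{..<d}-{s}. g i $$ (k i, c))"
  have gs: "g s \<in> carrier_mat r r" "invertible_mat (g s)"
    using g s nr by (auto simp: stabilizer_def GLprod_def)
  have eq: "(\<Sum>c<r. g s $$ (e, c) * w c) = 0" if e: "e < r" for e
  proof -
    define k' where "k' = k(s := e)"
    have k': "k' \<in> multi_idx d n" using k e s nr by (auto simp: k'_def multi_idx_def)
    have "(\<Sum>c<r. \<Prod>i<d. g i $$ (k' i, c)) = (if \<exists>c<r. \<forall>i<d. k' i = c then 1 else 0)"
      by (rule stab_eq[OF d rn g k'])
    also have "\<dots> = 0" using pq by (auto simp: k'_def)
    finally have "(\<Sum>c<r. \<Prod>i<d. g i $$ (k' i, c)) = 0" .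
    moreover have "(\<Prod>i<d. g i $$ (k' i, c)) = g s $$ (e, c) * w c" for c
    proof -
      have "(\<Prod>i<d. g i $$ (k' i, c)) = g s $$ (k' s, c) * (\<Prod>i\<in>{..<d}-{s}. g i $$ (k' i, c))"
        using s by (intro prod.remove) auto
      also have "(\<Prod>i\<in>{..<d}-{s}. g i $$ (k' i, c)) = w c"
        unfolding w_def by (intro prod.cong) (auto simp: k'_def)
      finally show ?thesis by (simp add: k'_def)
    qed
    ultimately show ?thesis by simp
  qed
  have sp: "mat_inv (g s) \<in> carrier_mat r r" "mat_inv (g s) * g s = 1\<^sub>m r" using inv_spec[OF gs] by auto
  have "(\<Sum>c'<r. (if c = c' then 1 else 0) * w c') = (\<Sum>c'<r. if c = c' then w c' else 0)"
    by (intro sum.cong) auto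
  then have "w c = (\<Sum>c'<r. (if c = c' then 1 else 0) * w c')" using c by (simp add: sum.delta)
  also have "\<dots> = (\<Sum>c'<r. (mat_inv (g s) * g s) $$ (c, c') * w c')"
    using sp c by (intro sum.cong) auto
  also have "\<dots> = (\<Sum>c'<r. (\<Sum>e<r. mat_inv (g s) $$ (c, e) * g s $$ (e, c')) * w c')"
    using mult_entry[OF sp(1) gs(1) c] by (intro sum.cong) auto
  also have "\<dots> = (\<Sum>e<r. mat_inv (g s) $$ (c, e) * (\<Sum>c'<r. g s $$ (e, c') * w c'))"
  proof -
    have "(\<Sum>c'<r. (\<Sum>e<r. mat_inv (g s) $$ (c, e) * g s $$ (e, c')) * w c') =
        (\<Sum>c'<r. \<Sum>e<r. mat_inv (g s) $$ (c, e) * (g s $$ (e, c') * w c'))"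
      by (simp only: sum_distrib_right mult.assoc)
    also have "\<dots> = (\<Sum>e<r. \<Sum>c'<r. mat_inv (g s) $$ (c, e) * (g s $$ (e, c') * w c'))"
      by (rule sum.swap)
    also have "\<dots> = (\<Sum>e<r. mat_inv (g s) $$ (c, e) * (\<Sum>c'<r. g s $$ (e, c') * w c'))"
      by (simp only: sum_distrib_left)
    finally show ?thesis .
  qed
  also have "\<dots> = 0" using eq by simp
  finally show ?thesis by (simp add: w_def)
qed


lemma third_index:
  assumes "d \<ge> (3::nat)" "p < d" "q < d"
  obtains s where "s < d" "s \<noteq> p" "s \<noteq> q"
proof -
  have "{0,1,2} - {p, q} \<noteq> ({} :: nat set)"
  proof
    assume "{0,1,2} - {p, q} = ({} :: nat set)"
    then have "{0,1,2} \<subseteq> {p, q}" by blast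
    then have "card {0,1,2::nat} \<le> card {p, q}" by (intro card_mono) auto
    moreover have "card {p, q} \<le> 2" by (rule order_trans[OF card_insert_le_m1]) auto
    ultimately show False by simp
  qed
  then obtain l where "l \<in> {0,1,2} - {p, q}" by blast
  then have "l < 3" "l \<noteq> p" "l \<noteq> q" by auto
  then show ?thesis using that[of l] assms by simp
qed

lemma stab_pair:
  assumes d: "d \<ge> 3" and nr: "\<forall>i<d. n i = r" and g: "g \<in> stabilizer d n (diag_tensor d n r)"
    and pq: "p < d" "q < d" "p \<noteq> q" and abc: "c < r" "a < r" "b < r"
    and nz: "g p $$ (a, c) \<noteq> 0" "g q $$ (b, c) \<noteq> 0"
  shows "a = b"
proof (rule ccontr)
  assume ab: "a \<noteq> b"
  obtain s where s: "s < d" "s \<noteq> p" "s \<noteq> q" using third_index[OF d pq(1,2)] by blast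
  have gi: "\<And>i. i < d \<Longrightarrow> g i \<in> carrier_mat r r \<and> invertible_mat (g i)"
    using g nr by (auto simp: stabilizer_def GLprod_def)
  define \<rho> where "\<rho> = (\<lambda>i. SOME x. x < r \<and> g i $$ (x, c) \<noteq> 0)"
  have \<rho>: "\<rho> i < r \<and> g i $$ (\<rho> i, c) \<noteq> 0" if i: "i < d" for i
  proof -
    have "\<exists>x. x < r \<and> g i $$ (x, c) \<noteq> 0" using col_nonzero[OF _ _ abc(1)] gi[OF i] by blast
    then show ?thesis unfolding \<rho>_def by (rule someI_ex)
  qed
  define k where "k = (\<lambda>i. if i = p then a else if i = q then b else if i < d then \<rho> i else 0)"
  have k: "k \<in> multi_idx d n" using \<rho> abc nr pq by (auto simp: k_def multi_idx_def)
  have "(\<Prod>i\<in>{..<d}-{s}. g i $$ (k i, c)) = 0"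
    by (rule stab_F[OF _ nr g s(1) k pq(1,2) s(2,3)[symmetric] _ abc(1)]) (use d ab pq in \<open>auto simp: k_def\<close>)
  moreover have "\<forall>i\<in>{..<d}-{s}. g i $$ (k i, c) \<noteq> 0"
    using nz \<rho> by (auto simp: k_def)
  ultimately show False by simp
qed

definition sig :: "(nat \<Rightarrow> real mat) \<Rightarrow> nat \<Rightarrow> nat \<Rightarrow> nat" where
  "sig g r c = (SOME a. a < r \<and> g 0 $$ (a, c) \<noteq> 0)"

lemma stab_struct:
  assumes d: "d \<ge> 3" and nr: "\<forall>i<d. n i = r" and g: "g \<in> stabilizer d n (diag_tensor d n r)"
    and i: "i < d" and a: "a < r" and c: "c < r"
  shows "sig g r c < r \<and> (g i $$ (a, c) \<noteq> 0 \<longleftrightarrow> a = sig g r c)"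
proof -
  have gi: "\<And>i. i < d \<Longrightarrow> g i \<in> carrier_mat r r \<and> invertible_mat (g i)"
    using g nr by (auto simp: stabilizer_def GLprod_def)
  have ex: "\<And>i. i < d \<Longrightarrow> \<exists>x<r. g i $$ (x, c) \<noteq> 0" using col_nonzero[OF _ _ c] gi by blast
  have s: "sig g r c < r \<and> g 0 $$ (sig g r c, c) \<noteq> 0"
  proof -
    have "\<exists>x. x < r \<and> g 0 $$ (x, c) \<noteq> 0" using ex[of 0] d by auto
    then show ?thesis unfolding sig_def by (rule someI_ex)
  qed
  have d1: "1 < d" using d by simp
  show ?thesis
  proof (intro conjI iffI)
    show "sig g r c < r" using s by simp
  next
    assume nz: "g i $$ (a, c) \<noteq> 0"
    show "a = sig g r c"
    proof (cases "i = 0")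
      case False
      show ?thesis by (rule stab_pair[OF d nr g i _ False c a _ nz]) (use s d in auto)
    next
      case True
      obtain b where b: "b < r" "g 1 $$ (b, c) \<noteq> 0" using ex[OF d1] by blast
      have "a = b" by (rule stab_pair[OF d nr g i d1 _ c a b(1) nz b(2)]) (use True in auto)
      moreover have "sig g r c = b" by (rule stab_pair[OF d nr g _ d1 _ c _ b(1) _ b(2)]) (use s d in auto)
      ultimately show ?thesis by simp
    qed
  next
    assume ac: "a = sig g r c"
    show "g i $$ (a, c) \<noteq> 0"
    proof (cases "i = 0")
      case True
      then show ?thesis using s ac by simp
    next
      case False
      obtain b where b: "b < r" "g i $$ (b, c) \<noteq> 0" using ex[OF i] by blast
      have "b = sig g r c" by (rule stab_pair[OF d nr g i _ False c b(1) _ b(2)]) (use s d in auto)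
      then show ?thesis using b ac by simp
    qed
  qed
qed


lemma conj_diag:
  assumes d: "d \<ge> 3" and nr: "\<forall>i<d. n i = r" and g: "g \<in> stabilizer d n (diag_tensor d n r)"
    and i: "i < d" and Z: "Z \<in> carrier_mat r r" and a: "a < r"
  shows "(g i * Z * mat_inv (g i)) $$ (a, a) = (\<Sum>x<r. if sig g r x = a then Z $$ (x, x) else 0)"
proof -
  define G where "G = g i"
  define Gi where "Gi = mat_inv G"
  define \<sigma> where "\<sigma> = sig g r"
  have Gc: "G \<in> carrier_mat r r" "invertible_mat G" using g nr i by (auto simp: stabilizer_def GLprod_def G_def)
  have sp: "Gi \<in> carrier_mat r r" "Gi * G = 1\<^sub>m r" using inv_spec[OF Gc] by (auto simp: Gi_def)
  have st: "\<And>a c. a < r \<Longrightarrow> c < r \<Longrightarrow> \<sigma> c < r \<and> (G $$ (a, c) \<noteq> 0 \<longleftrightarrow> a = \<sigma> c)"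
    using stab_struct[OF d nr g i] by (simp add: G_def \<sigma>_def)
  have gv: "Gi $$ (y, \<sigma> x) * G $$ (\<sigma> x, x) = (if y = x then 1 else 0)" if xy: "x < r" "y < r" for x y
  proof -
    have "(Gi * G) $$ (y, x) = (\<Sum>e<r. Gi $$ (y, e) * G $$ (e, x))"
      by (rule mult_entry[OF sp(1) Gc(1) xy(2,1)])
    also have "\<dots> = (\<Sum>e<r. if e = \<sigma> x then Gi $$ (y, e) * G $$ (e, x) else 0)"
      using st xy by (intro sum.cong) auto
    also have "\<dots> = Gi $$ (y, \<sigma> x) * G $$ (\<sigma> x, x)" using st[OF xy(1) xy(1)] by (simp add: sum.delta)
    finally show ?thesis using sp xy by simp
  qed
  have GZ: "G * Z \<in> carrier_mat r r" using Gc Z by auto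
  have "(G * Z * Gi) $$ (a, a) = (\<Sum>y<r. (G * Z) $$ (a, y) * Gi $$ (y, a))"
    by (rule mult_entry[OF GZ sp(1) a a])
  also have "\<dots> = (\<Sum>y<r. (\<Sum>x<r. G $$ (a, x) * Z $$ (x, y)) * Gi $$ (y, a))"
    using mult_entry[OF Gc(1) Z a] by (intro sum.cong) auto
  also have "\<dots> = (\<Sum>y<r. \<Sum>x<r. G $$ (a, x) * (Z $$ (x, y) * Gi $$ (y, a)))"
    by (simp only: sum_distrib_right mult.assoc)
  also have "\<dots> = (\<Sum>x<r. \<Sum>y<r. G $$ (a, x) * (Z $$ (x, y) * Gi $$ (y, a)))"
    by (rule sum.swap)
  also have "\<dots> = (\<Sum>x<r. G $$ (a, x) * (\<Sum>y<r. Z $$ (x, y) * Gi $$ (y, a)))"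
    by (simp only: sum_distrib_left)
  also have "\<dots> = (\<Sum>x<r. if \<sigma> x = a then Z $$ (x, x) else 0)"
  proof (rule sum.cong[OF refl])
    fix x assume x: "x \<in> {..<r}"
    show "G $$ (a, x) * (\<Sum>y<r. Z $$ (x, y) * Gi $$ (y, a)) = (if \<sigma> x = a then Z $$ (x, x) else 0)"
    proof (cases "\<sigma> x = a")
      case True
      have nz: "G $$ (a, x) \<noteq> 0" using st[OF a] x True by auto
      have "(\<Sum>y<r. Z $$ (x, y) * Gi $$ (y, a)) = (\<Sum>y<r. if y = x then Z $$ (x, x) / G $$ (a, x) else 0)"
      proof (rule sum.cong[OF refl])
        fix y assume y: "y \<in> {..<r}"
        have "Gi $$ (y, a) * G $$ (a, x) = (if y = x then 1 else 0)" using gv[of x y] x y True by simp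
        then have "Gi $$ (y, a) = (if y = x then 1 / G $$ (a, x) else 0)" using nz
          by (auto simp: field_simps split: if_splits)
        then show "Z $$ (x, y) * Gi $$ (y, a) = (if y = x then Z $$ (x, x) / G $$ (a, x) else 0)" by simp
      qed
      also have "\<dots> = Z $$ (x, x) / G $$ (a, x)" using x by (simp add: sum.delta)
      finally show ?thesis using True nz by simp
    next
      case False
      then have "G $$ (a, x) = 0" using st[OF a] x by auto
      then show ?thesis using False by simp
    qed
  qed
  finally show ?thesis by (simp add: G_def Gi_def \<sigma>_def)
qed


definition dmat :: "nat \<Rightarrow> (nat \<Rightarrow> real) \<Rightarrow> real mat" where
  "dmat N f = mat N N (\<lambda>(x, y). if x = y then f x else 0)"

lemma dmat_carrier[simp]: "dmat N f \<in> carrier_mat N N" by (simp add: dmat_def)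
lemma dmat_index[simp]: "x < N \<Longrightarrow> y < N \<Longrightarrow> dmat N f $$ (x, y) = (if x = y then f x else 0)"
  by (simp add: dmat_def)

lemma dmat_mult: "dmat N f * dmat N h = dmat N (\<lambda>x. f x * h x)"
proof (rule eq_matI)
  fix x y assume xy: "x < dim_row (dmat N (\<lambda>x. f x * h x))" "y < dim_col (dmat N (\<lambda>x. f x * h x))"
  then have xy': "x < N" "y < N" by (auto simp: dmat_def)
  have "(dmat N f * dmat N h) $$ (x, y) = (\<Sum>k<N. dmat N f $$ (x, k) * dmat N h $$ (k, y))"
    by (rule mult_entry[OF dmat_carrier dmat_carrier xy'])
  also have "\<dots> = (\<Sum>k<N. if k = x then (if x = y then f x * h x else 0) else 0)"
    using xy' by (intro sum.cong) auto
  also have "\<dots> = dmat N (\<lambda>x. f x * h x) $$ (x, y)" using xy' by (simp add: sum.delta)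
  finally show "(dmat N f * dmat N h) $$ (x, y) = dmat N (\<lambda>x. f x * h x) $$ (x, y)" .
qed (auto simp: dmat_def)

lemma dmat_one: "dmat N (\<lambda>x. 1) = 1\<^sub>m N"
  by (rule eq_matI) (auto simp: dmat_def)

lemma diag_pow:
  fixes D :: "real mat"
  assumes D: "D \<in> carrier_mat N N" and dg: "\<And>x y. x < N \<Longrightarrow> y < N \<Longrightarrow> x \<noteq> y \<Longrightarrow> D $$ (x, y) = 0"
    and xy: "x < N" "y < N"
  shows "(D ^\<^sub>m k) $$ (x, y) = (if x = y then D $$ (x, x) ^ k else 0)"
  using xy(2)
proof (induction k arbitrary: y)
  case 0
  then show ?case using D xy by simp
next
  case (Suc k)
  have "(D ^\<^sub>m Suc k) $$ (x, y) = (\<Sum>c<N. (D ^\<^sub>m k) $$ (x, c) * D $$ (c, y))"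
    using mult_entry[of "D ^\<^sub>m k" N N D N x y] D xy Suc.prems by simp
  also have "\<dots> = (\<Sum>c<N. if c = x then D $$ (x, x) ^ k * D $$ (x, y) else 0)"
    using Suc.IH by (intro sum.cong) auto
  also have "\<dots> = (if x = y then D $$ (x, x) ^ Suc k else 0)"
    using xy dg Suc.prems by (simp add: sum.delta)
  finally show ?case .
qed

lemma exp_diag:
  fixes D :: "real mat"
  assumes D: "D \<in> carrier_mat N N" and dg: "\<And>x y. x < N \<Longrightarrow> y < N \<Longrightarrow> x \<noteq> y \<Longrightarrow> D $$ (x, y) = 0"
  shows "mat_exp (t \<cdot>\<^sub>m D) = dmat N (\<lambda>x. exp (t * D $$ (x, x)))"
proof (rule eq_matI)
  fix x y assume "x < dim_row (dmat N (\<lambda>x. exp (t * D $$ (x, x))))" "y < dim_col (dmat N (\<lambda>x. exp (t * D $$ (x, x))))"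
  then have xy: "x < N" "y < N" by (auto simp: dmat_def)
  have "mat_exp (t \<cdot>\<^sub>m D) $$ (x, y) = (\<Sum>k. ((D ^\<^sub>m k) $$ (x, y) / fact k) * t ^ k)"
    by (rule exp_entry[OF D xy])
  also have "\<dots> = (\<Sum>k. if x = y then (t * D $$ (x, x)) ^ k /\<^sub>R fact k else 0)"
    using diag_pow[OF D dg xy] by (intro suminf_cong) (simp add: power_mult_distrib field_simps)
  also have "\<dots> = dmat N (\<lambda>x. exp (t * D $$ (x, x))) $$ (x, y)"
    using xy by (auto simp: exp_def)
  finally show "mat_exp (t \<cdot>\<^sub>m D) $$ (x, y) = dmat N (\<lambda>x. exp (t * D $$ (x, x))) $$ (x, y)" .
qed (use D in \<open>auto simp: mat_exp_def dmat_def\<close>)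

lemma diag_in_lie:
  assumes d: "d > 0" and rn: "\<forall>i<d. r \<le> n i" and Z: "Z \<in> glprod d n"
    and dg: "\<And>i x y. i < d \<Longrightarrow> x < n i \<Longrightarrow> y < n i \<Longrightarrow> x \<noteq> y \<Longrightarrow> Z i $$ (x, y) = 0"
    and s0: "\<And>c. c < r \<Longrightarrow> (\<Sum>i<d. Z i $$ (c, c)) = 0"
  shows "Z \<in> lie_algebra d n (stabilizer d n (diag_tensor d n r))"
  unfolding lie_algebra_def
proof (intro CollectI conjI allI Z)
  fix t :: real
  have Zc: "\<And>i. i < d \<Longrightarrow> Z i \<in> carrier_mat (n i) (n i)" and Zd: "\<And>i. d \<le> i \<Longrightarrow> Z i = 0\<^sub>m 0 0"
    using Z by (auto simp: glprod_def)
  have ex: "\<And>i. i < d \<Longrightarrow> mat_exp (t \<cdot>\<^sub>m Z i) = dmat (n i) (\<lambda>x. exp (t * Z i $$ (x, x)))"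
    using exp_diag[OF Zc dg] by blast
  let ?g = "\<lambda>i. mat_exp (t \<cdot>\<^sub>m Z i)"
  have "?g \<in> GLprod d n"
    unfolding GLprod_def
  proof (intro CollectI conjI allI impI)
    fix i assume i: "i < d"
    show "?g i \<in> carrier_mat (n i) (n i)" using ex[OF i] by simp
    have "dmat (n i) (\<lambda>x. exp (t * Z i $$ (x, x))) * dmat (n i) (\<lambda>x. exp (- (t * Z i $$ (x, x)))) = 1\<^sub>m (n i)"
      "dmat (n i) (\<lambda>x. exp (- (t * Z i $$ (x, x)))) * dmat (n i) (\<lambda>x. exp (t * Z i $$ (x, x))) = 1\<^sub>m (n i)"
      by (simp_all add: dmat_mult exp_minus dmat_one[symmetric])
    then show "invertible_mat (?g i)" using ex[OF i] mat_inv_unique(2)[OF dmat_carrier dmat_carrier] by simp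
  next
    fix i assume "d \<le> i"
    then show "?g i = 1\<^sub>m 0" using Zd by (intro eq_matI) (auto simp: mat_exp_def)
  qed
  moreover have "tensor_act d n ?g (diag_tensor d n r) = diag_tensor d n r"
  proof (rule stab_colform[OF d rn, where lam = "\<lambda>i c. exp (t * Z i $$ (c, c))"])
    fix i x c assume "i < d" "x < n i" "c < r"
    then show "?g i $$ (x, c) = (if x = c then exp (t * Z i $$ (c, c)) else 0)"
      using ex rn by auto
  next
    fix c assume c: "c < r"
    have "(\<Prod>i<d. exp (t * Z i $$ (c, c))) = exp (\<Sum>i<d. t * Z i $$ (c, c))"
      by (simp add: exp_sum)
    also have "\<dots> = 1" using s0[OF c] by (simp add: sum_distrib_left[symmetric])
    finally show "(\<Prod>i<d. exp (t * Z i $$ (c, c))) = 1" .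
  qed
  ultimately show "?g \<in> stabilizer d n (diag_tensor d n r)" by (simp add: stabilizer_def)
qed


definition mspace :: "nat \<Rightarrow> (nat \<Rightarrow> nat) \<Rightarrow> nat \<Rightarrow> (nat \<Rightarrow> real mat) set" where
  "mspace d n r = {Z \<in> glprod d n. \<forall>i<d. \<forall>i'<d. \<forall>a<r. Z i $$ (a, a) = Z i' $$ (a, a)}"

lemma mspace_inv:
  assumes d: "d \<ge> 3" and nr: "\<forall>i<d. n i = r" and h: "h \<in> stabilizer d n (diag_tensor d n r)"
    and Z: "Z \<in> mspace d n r"
  shows "tup_conj h Z \<in> mspace d n r"
proof -
  have Zg: "Z \<in> glprod d n" using Z by (simp add: mspace_def)
  have hc: "\<And>i. i < d \<Longrightarrow> h i \<in> carrier_mat r r \<and> invertible_mat (h i)" and hd: "\<And>i. d \<le> i \<Longrightarrow> h i = 1\<^sub>m 0"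
    using h nr by (auto simp: stabilizer_def GLprod_def)
  have Zc: "\<And>i. i < d \<Longrightarrow> Z i \<in> carrier_mat r r" and Zd: "\<And>i. d \<le> i \<Longrightarrow> Z i = 0\<^sub>m 0 0"
    using Zg nr by (auto simp: glprod_def)
  have "tup_conj h Z \<in> glprod d n"
    unfolding glprod_def tup_conj_def
  proof (intro CollectI conjI allI impI)
    fix i assume i: "i < d"
    have "mat_inv (h i) \<in> carrier_mat r r" using inv_spec[of "h i" r] hc[OF i] by auto
    then show "h i * Z i * mat_inv (h i) \<in> carrier_mat (n i) (n i)" using hc[OF i] Zc[OF i] nr i by auto
  next
    fix i assume i: "d \<le> i"
    show "h i * Z i * mat_inv (h i) = 0\<^sub>m 0 0" unfolding hd[OF i] Zd[OF i] mat_inv_one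
      by (intro eq_matI) auto
  qed
  moreover have "\<forall>i<d. \<forall>i'<d. \<forall>a<r. tup_conj h Z i $$ (a, a) = tup_conj h Z i' $$ (a, a)"
  proof (intro allI impI)
    fix i i' a assume i: "i < d" and i': "i' < d" and a: "a < r"
    have "tup_conj h Z i $$ (a, a) = (\<Sum>x<r. if sig h r x = a then Z i $$ (x, x) else 0)"
      unfolding tup_conj_def by (rule conj_diag[OF d nr h i Zc[OF i] a])
    also have "\<dots> = (\<Sum>x<r. if sig h r x = a then Z i' $$ (x, x) else 0)"
    proof -
      have "\<forall>x<r. Z i $$ (x, x) = Z i' $$ (x, x)" using Z i i' unfolding mspace_def by blast
      then show ?thesis by (intro sum.cong) auto
    qed
    also have "\<dots> = tup_conj h Z i' $$ (a, a)"
      unfolding tup_conj_def by (rule conj_diag[OF d nr h i' Zc[OF i'] a, symmetric])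
    finally show "tup_conj h Z i $$ (a, a) = tup_conj h Z i' $$ (a, a)" .
  qed
  ultimately show ?thesis unfolding mspace_def by blast
qed


lemma lie_char:
  assumes d: "d \<ge> 3" and nr: "\<forall>i<d. n i = r"
  shows "Z \<in> lie_algebra d n (stabilizer d n (diag_tensor d n r)) \<longleftrightarrow>
    Z \<in> glprod d n \<and> (\<forall>i<d. \<forall>a<r. \<forall>j<r. a \<noteq> j \<longrightarrow> Z i $$ (a, j) = 0) \<and> (\<forall>j<r. (\<Sum>i<d. Z i $$ (j, j)) = 0)"
proof
  have rn: "\<forall>i<d. r \<le> n i" using nr by simp
  assume Z: "Z \<in> lie_algebra d n (stabilizer d n (diag_tensor d n r))"
  then show "Z \<in> glprod d n \<and> (\<forall>i<d. \<forall>a<r. \<forall>j<r. a \<noteq> j \<longrightarrow> Z i $$ (a, j) = 0) \<and> (\<forall>j<r. (\<Sum>i<d. Z i $$ (j, j)) = 0)"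
    using lie_hset[OF d rn Z] nr by (auto simp: lie_algebra_def)
next
  have rn: "\<forall>i<d. r \<le> n i" using nr by simp
  assume h: "Z \<in> glprod d n \<and> (\<forall>i<d. \<forall>a<r. \<forall>j<r. a \<noteq> j \<longrightarrow> Z i $$ (a, j) = 0) \<and> (\<forall>j<r. (\<Sum>i<d. Z i $$ (j, j)) = 0)"
  show "Z \<in> lie_algebra d n (stabilizer d n (diag_tensor d n r))"
    by (rule diag_in_lie[OF _ rn]) (use h d nr in auto)
qed

lemma trace_inner:
  fixes A B :: "real mat"
  assumes A: "A \<in> carrier_mat N N" and B: "B \<in> carrier_mat N N"
  shows "mat_trace (A * transpose_mat B) = (\<Sum>x<N. \<Sum>y<N. A $$ (x, y) * B $$ (x, y))"
proof -
  have Bt: "transpose_mat B \<in> carrier_mat N N" using B by auto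
  have "mat_trace (A * transpose_mat B) = (\<Sum>x<N. (A * transpose_mat B) $$ (x, x))"
    using A by (simp add: mat_trace_def)
  also have "\<dots> = (\<Sum>x<N. \<Sum>y<N. A $$ (x, y) * B $$ (x, y))"
    using mult_entry[OF A Bt] B by (intro sum.cong) auto
  finally show ?thesis .
qed

lemma mspaceD:
  assumes "Z \<in> mspace d n r"
  shows "Z \<in> glprod d n" "\<And>i i' a. i < d \<Longrightarrow> i' < d \<Longrightarrow> a < r \<Longrightarrow> Z i $$ (a, a) = Z i' $$ (a, a)"
  using assms unfolding mspace_def by blast+

lemma glprodD:
  assumes "Z \<in> glprod d n"
  shows "\<And>i. i < d \<Longrightarrow> Z i \<in> carrier_mat (n i) (n i)" "\<And>i. d \<le> i \<Longrightarrow> Z i = 0\<^sub>m 0 0"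
  using assms unfolding glprod_def by blast+

lemma mspace_subspace:
  assumes nr: "\<forall>i<d. n i = r"
  shows "is_subspace_gl d n (mspace d n r)"
  unfolding is_subspace_gl_def
proof (intro conjI ballI allI)
  show "mspace d n r \<subseteq> glprod d n" using mspaceD(1) by blast
  show "tup_zero d n \<in> mspace d n r"
    using nr by (auto simp: mspace_def glprod_def tup_zero_def)
next
  fix X Y assume X: "X \<in> mspace d n r" and Y: "Y \<in> mspace d n r"
  have Xc: "\<And>i. i < d \<Longrightarrow> X i \<in> carrier_mat r r" "\<And>i. d \<le> i \<Longrightarrow> X i = 0\<^sub>m 0 0"
    using glprodD[OF mspaceD(1)[OF X]] nr by auto
  have Yc: "\<And>i. i < d \<Longrightarrow> Y i \<in> carrier_mat r r" "\<And>i. d \<le> i \<Longrightarrow> Y i = 0\<^sub>m 0 0"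
    using glprodD[OF mspaceD(1)[OF Y]] nr by auto
  have Xe: "\<And>i i' a. i < d \<Longrightarrow> i' < d \<Longrightarrow> a < r \<Longrightarrow> X i $$ (a, a) = X i' $$ (a, a)"
    using mspaceD(2)[OF X] by blast
  have Ye: "\<And>i i' a. i < d \<Longrightarrow> i' < d \<Longrightarrow> a < r \<Longrightarrow> Y i $$ (a, a) = Y i' $$ (a, a)"
    using mspaceD(2)[OF Y] by blast
  have "tup_add X Y \<in> glprod d n"
    unfolding glprod_def tup_add_def
  proof (intro CollectI conjI allI impI)
    fix i assume "i < d" then show "X i + Y i \<in> carrier_mat (n i) (n i)" using Xc Yc nr by auto
  next
    fix i assume "d \<le> i" then show "X i + Y i = 0\<^sub>m 0 0" using Xc Yc by (intro eq_matI) auto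
  qed
  moreover have "\<forall>i<d. \<forall>i'<d. \<forall>a<r. tup_add X Y i $$ (a, a) = tup_add X Y i' $$ (a, a)"
  proof (intro allI impI)
    fix i i' a assume h: "i < d" "i' < d" "a < r"
    then show "tup_add X Y i $$ (a, a) = tup_add X Y i' $$ (a, a)"
      using Xc(1)[OF h(1)] Yc(1)[OF h(1)] Xc(1)[OF h(2)] Yc(1)[OF h(2)] Xe[OF h] Ye[OF h] h by (simp add: tup_add_def)
  qed
  ultimately show "tup_add X Y \<in> mspace d n r" unfolding mspace_def by blast
next
  fix c :: real and X assume X: "X \<in> mspace d n r"
  have Xc: "\<And>i. i < d \<Longrightarrow> X i \<in> carrier_mat r r" "\<And>i. d \<le> i \<Longrightarrow> X i = 0\<^sub>m 0 0"
    using glprodD[OF mspaceD(1)[OF X]] nr by auto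
  have Xe: "\<And>i i' a. i < d \<Longrightarrow> i' < d \<Longrightarrow> a < r \<Longrightarrow> X i $$ (a, a) = X i' $$ (a, a)"
    using mspaceD(2)[OF X] by blast
  have "tup_smult c X \<in> glprod d n"
    unfolding glprod_def tup_smult_def
  proof (intro CollectI conjI allI impI)
    fix i assume "i < d" then show "c \<cdot>\<^sub>m X i \<in> carrier_mat (n i) (n i)" using Xc nr by auto
  next
    fix i assume "d \<le> i" then show "c \<cdot>\<^sub>m X i = 0\<^sub>m 0 0" using Xc by (intro eq_matI) auto
  qed
  moreover have "\<forall>i<d. \<forall>i'<d. \<forall>a<r. tup_smult c X i $$ (a, a) = tup_smult c X i' $$ (a, a)"
  proof (intro allI impI)
    fix i i' a assume h: "i < d" "i' < d" "a < r"
    then show "tup_smult c X i $$ (a, a) = tup_smult c X i' $$ (a, a)"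
      using Xc(1)[OF h(1)] Xc(1)[OF h(2)] Xe[OF h] h by (simp add: tup_smult_def)
  qed
  ultimately show "tup_smult c X \<in> mspace d n r" unfolding mspace_def by blast
qed

lemma mspace_cap:
  assumes d: "d \<ge> 3" and nr: "\<forall>i<d. n i = r"
  shows "mspace d n r \<inter> lie_algebra d n (stabilizer d n (diag_tensor d n r)) = {tup_zero d n}"
proof
  show "{tup_zero d n} \<subseteq> mspace d n r \<inter> lie_algebra d n (stabilizer d n (diag_tensor d n r))"
  proof -
    have "tup_zero d n \<in> mspace d n r" using mspace_subspace[OF nr] by (simp add: is_subspace_gl_def)
    moreover have "tup_zero d n \<in> lie_algebra d n (stabilizer d n (diag_tensor d n r))"
      unfolding lie_char[OF d nr] using nr by (auto simp: glprod_def tup_zero_def)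
    ultimately show ?thesis by simp
  qed
next
  show "mspace d n r \<inter> lie_algebra d n (stabilizer d n (diag_tensor d n r)) \<subseteq> {tup_zero d n}"
  proof
    fix Z assume Z: "Z \<in> mspace d n r \<inter> lie_algebra d n (stabilizer d n (diag_tensor d n r))"
    have Zc: "\<And>i. i < d \<Longrightarrow> Z i \<in> carrier_mat r r" "\<And>i. d \<le> i \<Longrightarrow> Z i = 0\<^sub>m 0 0"
      using glprodD[OF mspaceD(1)[of Z]] Z nr by auto
    have Zm: "Z \<in> mspace d n r" using Z by simp
    have Ze: "Z i $$ (a, a) = Z 0 $$ (a, a)" if "i < d" "a < r" for i a
      by (rule mspaceD(2)[OF Zm]) (use that d in auto)
    have L: "(\<forall>i<d. \<forall>a<r. \<forall>j<r. a \<noteq> j \<longrightarrow> Z i $$ (a, j) = 0) \<and> (\<forall>j<r. (\<Sum>i<d. Z i $$ (j, j)) = 0)"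
      using Z lie_char[OF d nr] by blast
    have z0: "Z 0 $$ (a, a) = 0" if a: "a < r" for a
    proof -
      have "(\<Sum>i<d. Z i $$ (a, a)) = (\<Sum>i<d. Z 0 $$ (a, a))"
        by (rule sum.cong[OF refl]) (rule Ze; use a in auto)
      then have "real d * Z 0 $$ (a, a) = 0" using L a by simp
      then show ?thesis using d by simp
    qed
    have "Z = tup_zero d n"
    proof
      fix i show "Z i = tup_zero d n i"
      proof (cases "i < d")
        case True
        show ?thesis
        proof (rule eq_matI)
          fix x y assume "x < dim_row (tup_zero d n i)" "y < dim_col (tup_zero d n i)"
          then have xy: "x < r" "y < r" using True nr by (auto simp: tup_zero_def)
          show "Z i $$ (x, y) = tup_zero d n i $$ (x, y)"
          proof (cases "x = y")
            case True
            then show ?thesis using xy z0[OF xy(1)] Ze[OF \<open>i < d\<close> xy(1)] \<open>i < d\<close> nr by (simp add: tup_zero_def)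
          next
            case False
            then show ?thesis using xy L \<open>i < d\<close> nr by (simp add: tup_zero_def)
          qed
        qed (use True Zc nr in \<open>auto simp: tup_zero_def\<close>)
      next
        case False
        then show ?thesis using Zc by (simp add: tup_zero_def)
      qed
    qed
    then show "Z \<in> {tup_zero d n}" by simp
  qed
qed


lemma dmat_dims[simp]: "dim_row (dmat N f) = N" "dim_col (dmat N f) = N"
  by (simp_all add: dmat_def)

lemma mspace_dec:
  assumes d: "d \<ge> 3" and nr: "\<forall>i<d. n i = r" and Z: "Z \<in> glprod d n"
  shows "\<exists>X\<in>mspace d n r. \<exists>Y\<in>lie_algebra d n (stabilizer d n (diag_tensor d n r)). Z = tup_add X Y"
proof -
  have Zc: "\<And>i. i < d \<Longrightarrow> Z i \<in> carrier_mat r r" "\<And>i. d \<le> i \<Longrightarrow> Z i = 0\<^sub>m 0 0"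
    using glprodD[OF Z] nr by auto
  define avg where "avg = (\<lambda>x. (\<Sum>i<d. Z i $$ (x, x)) / real d)"
  define Y where "Y = (\<lambda>i. if i < d then dmat r (\<lambda>x. Z i $$ (x, x) - avg x) else 0\<^sub>m 0 0)"
  define X where "X = (\<lambda>i. if i < d then mat r r (\<lambda>(x, y). if x = y then avg x else Z i $$ (x, y)) else 0\<^sub>m 0 0)"
  have Xg: "X \<in> glprod d n" using nr by (auto simp: X_def glprod_def)
  have "X \<in> mspace d n r"
    unfolding mspace_def using Xg by (auto simp: X_def)
  moreover have "Y \<in> lie_algebra d n (stabilizer d n (diag_tensor d n r))"
    unfolding lie_char[OF d nr]
  proof (intro conjI allI impI)
    show "Y \<in> glprod d n" using nr by (auto simp: Y_def glprod_def)
  next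
    fix i a j assume "i < d" "a < r" "j < r" "a \<noteq> j"
    then show "Y i $$ (a, j) = 0" by (simp add: Y_def)
  next
    fix j assume j: "j < r"
    have "(\<Sum>i<d. Y i $$ (j, j)) = (\<Sum>i<d. Z i $$ (j, j) - avg j)"
      using j by (intro sum.cong) (auto simp: Y_def)
    also have "\<dots> = 0" using d by (simp add: sum_subtractf avg_def)
    finally show "(\<Sum>i<d. Y i $$ (j, j)) = 0" .
  qed
  moreover have "Z = tup_add X Y"
  proof
    fix i show "Z i = tup_add X Y i"
    proof (cases "i < d")
      case True
      show ?thesis unfolding tup_add_def
        by (rule eq_matI) (use True Zc(1)[OF True] in \<open>auto simp: X_def Y_def\<close>)
    next
      case False
      then show ?thesis using Zc(2)[of i] by (auto simp: tup_add_def X_def Y_def)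
    qed
  qed
  ultimately show ?thesis by blast
qed

lemma inner_formula:
  assumes nr: "\<forall>i<d. n i = r" and Z: "Z \<in> glprod d n" and W: "W \<in> glprod d n"
  shows "gl_inner d Z W = (\<Sum>l<d. \<Sum>x<r. \<Sum>y<r. Z l $$ (x, y) * W l $$ (x, y))"
  unfolding gl_inner_def
  using trace_inner glprodD(1)[OF Z] glprodD(1)[OF W] nr by (intro sum.cong) auto


lemma orth_eq:
  assumes d: "d \<ge> 3" and nr: "\<forall>i<d. n i = r"
  shows "orth_complement d n (lie_algebra d n (stabilizer d n (diag_tensor d n r))) = mspace d n r"
proof
  show "orth_complement d n (lie_algebra d n (stabilizer d n (diag_tensor d n r))) \<subseteq> mspace d n r"
  proof
    fix Z assume Z: "Z \<in> orth_complement d n (lie_algebra d n (stabilizer d n (diag_tensor d n r)))"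
    have Zg: "Z \<in> glprod d n" using Z by (simp add: orth_complement_def)
    have "Z i $$ (a, a) = Z i' $$ (a, a)" if i: "i < d" "i' < d" and a: "a < r" for i i' a
    proof (cases "i = i'")
      case True then show ?thesis by simp
    next
      case False
      define c where "c = (\<lambda>l. if l = i then 1 else if l = i' then -1 else (0::real))"
      define W where "W = (\<lambda>l. if l < d then dmat r (\<lambda>x. if x = a then c l else 0) else 0\<^sub>m 0 0)"
      have Wg: "W \<in> glprod d n" using nr by (auto simp: W_def glprod_def)
      have WL: "W \<in> lie_algebra d n (stabilizer d n (diag_tensor d n r))"
        unfolding lie_char[OF d nr]
      proof (intro conjI allI impI Wg)
        fix l x j assume "l < d" "x < r" "j < r" "x \<noteq> j"
        then show "W l $$ (x, j) = 0" by (simp add: W_def)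
      next
        fix j assume j: "j < r"
        have "(\<Sum>l<d. W l $$ (j, j)) = (\<Sum>l<d. if j = a then c l else 0)"
          using j by (intro sum.cong) (auto simp: W_def)
        also have "\<dots> = 0"
        proof -
          have "(\<Sum>l<d. c l) = (\<Sum>l<d. (if l = i then 1 else 0) - (if l = i' then 1 else 0))"
            using False by (intro sum.cong) (auto simp: c_def)
          also have "\<dots> = 0" using i by (simp add: sum_subtractf sum.delta)
          finally show ?thesis by (cases "j = a") simp_all
        qed
        finally show "(\<Sum>l<d. W l $$ (j, j)) = 0" .
      qed
      have "0 = gl_inner d Z W" using Z WL by (auto simp: orth_complement_def)
      also have "\<dots> = (\<Sum>l<d. \<Sum>x<r. \<Sum>y<r. Z l $$ (x, y) * W l $$ (x, y))"
        by (rule inner_formula[OF nr Zg Wg])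
      also have "\<dots> = (\<Sum>l<d. (if l = i then Z i $$ (a, a) else 0) - (if l = i' then Z i' $$ (a, a) else 0))"
      proof (rule sum.cong[OF refl])
        fix l assume l: "l \<in> {..<d}"
        have "(\<Sum>x<r. \<Sum>y<r. Z l $$ (x, y) * W l $$ (x, y)) = (\<Sum>x<r. \<Sum>y<r. if y = x then (if x = a then Z l $$ (a, a) * c l else 0) else 0)"
          using l by (intro sum.cong) (auto simp: W_def)
        also have "\<dots> = Z l $$ (a, a) * c l" using a by (simp add: sum.delta)
        also have "\<dots> = (if l = i then Z i $$ (a, a) else 0) - (if l = i' then Z i' $$ (a, a) else 0)"
          using False by (auto simp: c_def)
        finally show "(\<Sum>x<r. \<Sum>y<r. Z l $$ (x, y) * W l $$ (x, y)) = (if l = i then Z i $$ (a, a) else 0) - (if l = i' then Z i' $$ (a, a) else 0)" .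
      qed
      also have "\<dots> = Z i $$ (a, a) - Z i' $$ (a, a)" using i by (simp add: sum_subtractf sum.delta)
      finally show ?thesis by simp
    qed
    then show "Z \<in> mspace d n r" using Zg unfolding mspace_def by blast
  qed
next
  show "mspace d n r \<subseteq> orth_complement d n (lie_algebra d n (stabilizer d n (diag_tensor d n r)))"
  proof
    fix Z assume Z: "Z \<in> mspace d n r"
    have Zg: "Z \<in> glprod d n" by (rule mspaceD(1)[OF Z])
    have d0: "0 < d" using d by simp
    have Ze: "Z l $$ (x, x) = Z 0 $$ (x, x)" if "l < d" "x < r" for l x
      by (rule mspaceD(2)[OF Z]) (use that d0 in auto)
    have "gl_inner d Z W = 0" if W: "W \<in> lie_algebra d n (stabilizer d n (diag_tensor d n r))" for W
    proof -
      have WW: "W \<in> glprod d n" "\<forall>i<d. \<forall>a<r. \<forall>j<r. a \<noteq> j \<longrightarrow> W i $$ (a, j) = 0" "\<forall>j<r. (\<Sum>i<d. W i $$ (j, j)) = 0"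
        using W lie_char[OF d nr] by blast+
      have "gl_inner d Z W = (\<Sum>l<d. \<Sum>x<r. \<Sum>y<r. Z l $$ (x, y) * W l $$ (x, y))"
        by (rule inner_formula[OF nr Zg WW(1)])
      also have "\<dots> = (\<Sum>l<d. \<Sum>x<r. Z 0 $$ (x, x) * W l $$ (x, x))"
      proof (rule sum.cong[OF refl])
        fix l assume l: "l \<in> {..<d}"
        have "(\<Sum>x<r. \<Sum>y<r. Z l $$ (x, y) * W l $$ (x, y)) = (\<Sum>x<r. \<Sum>y<r. if y = x then Z l $$ (x, x) * W l $$ (x, x) else 0)"
          using l WW(2) by (intro sum.cong) auto
        also have "\<dots> = (\<Sum>x<r. Z l $$ (x, x) * W l $$ (x, x))" by (simp add: sum.delta)
        also have "\<dots> = (\<Sum>x<r. Z 0 $$ (x, x) * W l $$ (x, x))"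
          by (rule sum.cong[OF refl]) (use Ze[of l] l in auto)
        finally show "(\<Sum>x<r. \<Sum>y<r. Z l $$ (x, y) * W l $$ (x, y)) = (\<Sum>x<r. Z 0 $$ (x, x) * W l $$ (x, x))" .
      qed
      also have "\<dots> = (\<Sum>x<r. \<Sum>l<d. Z 0 $$ (x, x) * W l $$ (x, x))" by (rule sum.swap)
      also have "\<dots> = (\<Sum>x<r. Z 0 $$ (x, x) * (\<Sum>l<d. W l $$ (x, x)))" by (simp only: sum_distrib_left)
      also have "\<dots> = 0" using WW(3) by simp
      finally show ?thesis .
    qed
    then show "Z \<in> orth_complement d n (lie_algebra d n (stabilizer d n (diag_tensor d n r)))"
      using Zg by (simp add: orth_complement_def)
  qed
qed


theorem mainTheorem4:
  fixes d r :: nat and n :: "nat \<Rightarrow> nat"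
  assumes "d \<ge> 3" and "\<forall>i<d. n i \<ge> 2"
    and "r > 0" and "\<forall>i<d. r \<le> n i"
  defines "H \<equiv> stabilizer d n (diag_tensor d n r)"
  shows "(reductive d n H \<longleftrightarrow> (\<forall>i<d. n i = r)) \<and>
         ((\<forall>i<d. n i = r) \<longrightarrow>
            (\<forall>h\<in>H. tup_conj h ` orth_complement d n (lie_algebra d n H)
                     \<subseteq> orth_complement d n (lie_algebra d n H)))"
proof (intro conjI impI ballI iffI)
  assume red: "reductive d n H"
  show "\<forall>i<d. n i = r"
  proof (rule ccontr)
    assume "\<not> (\<forall>i<d. n i = r)"
    then obtain i0 where "i0 < d" "n i0 \<noteq> r" by blast
    then have "r < n i0" using assms(4) by (simp add: order.not_eq_order_implies_strict)
    then show False using not_reductive[OF assms(1) assms(4) assms(3) \<open>i0 < d\<close>] red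
      unfolding H_def by blast
  qed
next
  assume nr: "\<forall>i<d. n i = r"
  show "reductive d n H"
    unfolding reductive_def H_def
  proof (intro exI conjI)
    show "is_subspace_gl d n (mspace d n r)" by (rule mspace_subspace[OF nr])
    show "mspace d n r \<inter> lie_algebra d n (stabilizer d n (diag_tensor d n r)) = {tup_zero d n}"
      by (rule mspace_cap[OF assms(1) nr])
    show "\<forall>Z\<in>glprod d n. \<exists>X\<in>mspace d n r. \<exists>Y\<in>lie_algebra d n (stabilizer d n (diag_tensor d n r)). Z = tup_add X Y"
      using mspace_dec[OF assms(1) nr] by blast
    show "\<forall>h\<in>stabilizer d n (diag_tensor d n r). \<forall>Z\<in>mspace d n r. tup_conj h Z \<in> mspace d n r"
      using mspace_inv[OF assms(1) nr] by blast
  qed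
next
  fix h assume nr: "\<forall>i<d. n i = r" and h: "h \<in> H"
  show "tup_conj h ` orth_complement d n (lie_algebra d n H) \<subseteq> orth_complement d n (lie_algebra d n H)"
    unfolding H_def orth_eq[OF assms(1) nr]
    using mspace_inv[OF assms(1) nr] h unfolding H_def by blast
qed


end
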